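(* Consider the biased voter model in the dynamic $d$-regular graph model, with $\kappa\le n$ opinions arbitrarily distributed over the nodes of $G_1$, and let $\phi_t$ be a lower bound on the conductance of $G_t$. Assume $\alpha_1\le 1-\epsilon$ for an arbitrarily small constant $\epsilon>0$, and assume that initially at least $c\log n$ nodes hold the preferred opinion $0$, for some constant $c=c(\alpha_1)$. Then, with high probability (i.e. with probability at least $1-1/n$), the preferred opinion prevails (all nodes hold opinion $0$) within at most $\tau'''$ rounds, where $\tau'''$ is the first round such that $\sum_{t=1}^{\tau'''}\phi_t\ge b\log n$, for some constant $b$. In particular, for static graphs ($G_{i+1}=G_i$ for all $i$) of conductance $\phi$, the consensus time is $T=O(\log n/\phi)$ with high probability.
   Context: Graphs are undirected, connected and $d$-regular on the vertex set $V=\{1,\dots,n\}$. For $U\subseteq V$ let $\mathrm{vol}(U)=d|U|$, $m$ the number of edges, and for $u\in U$ let $\lambda_u$ be the number of neighbours of $u$ in $V\setminus U$; the conductance of $G$ is $\phi(G)=\min\{\sum_{u\in U}\lambda_u/\mathrm{vol}(U): U\subset V,\ 0<\mathrm{vol}(U)\le m\}$. Dynamic $d$-regular graph model: an adversary generates a sequence $G_1,G_2,\dots$ of $d$-regular graphs on $V$, redistributing the edges in every round, subject to $G_t$ having conductance at least $\phi_t$, where the sequence $\phi_1,\phi_2,\dots$ is fixed in advance (not random). Biased voter model: there are $\kappa$ opinions $0,\dots,\kappa-1$; opinion $i$ has popularity $\alpha_i$, with $\alpha_0=1>\alpha_1\ge\alpha_2\ge\dots\ge\alpha_{\kappa-1}$;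 opinion $0$ is the preferred opinion. In each synchronous round $t$, every node independently chooses a neighbour in $G_t$ uniformly at random and, if that neighbour holds opinion $i$ (at the beginning of the round), adopts opinion $i$ with probability $\alpha_i$ and otherwise keeps its opinion. The consensus time $T$ is the first round after which all nodes hold the same opinion. *)

theory Defs
  imports "HOL-Probability.Probability"
begin

text \<open>Vertex set V = {1..n}. A graph is an edge relation E on nat.\<close>

definition regular_graph :: "nat \<Rightarrow> nat \<Rightarrow> (nat \<Rightarrow> nat \<Rightarrow> bool) \<Rightarrow> bool" where
  "regular_graph n d E \<longleftrightarrow>
     (\<forall>u v. E u v \<longrightarrow> u \<in> {1..n} \<and> v \<in> {1..n}) \<and>
     (\<forall>u v. E u v \<longrightarrow> E v u) \<and>
     (\<forall>u. \<not> E u u) \<and>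
     (\<forall>v\<in>{1..n}. card {u. E v u} = d) \<and>
     (\<forall>u\<in>{1..n}. \<forall>v\<in>{1..n}. E\<^sup>*\<^sup>* u v)"

definition num_edges :: "(nat \<Rightarrow> nat \<Rightarrow> bool) \<Rightarrow> nat" where
  "num_edges E = card {(u, v). E u v \<and> u < v}"

definition out_deg :: "nat \<Rightarrow> (nat \<Rightarrow> nat \<Rightarrow> bool) \<Rightarrow> nat set \<Rightarrow> nat \<Rightarrow> nat" where
  "out_deg n E U u = card {w \<in> {1..n} - U. E u w}"

definition vol :: "nat \<Rightarrow> nat set \<Rightarrow> real" where
  "vol d U = real d * real (card U)"

definition conductance :: "nat \<Rightarrow> nat \<Rightarrow> (nat \<Rightarrow> nat \<Rightarrow> bool) \<Rightarrow> real" where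
  "conductance n d E = Min {(\<Sum>u\<in>U. real (out_deg n E U u)) / vol d U | U.
      U \<subset> {1..n} \<and> 0 < vol d U \<and> vol d U \<le> real (num_edges E)}"

definition node_step :: "(nat \<Rightarrow> real) \<Rightarrow> (nat \<Rightarrow> nat \<Rightarrow> bool) \<Rightarrow> (nat \<Rightarrow> nat) \<Rightarrow> nat \<Rightarrow> nat pmf" where
  "node_step \<alpha> E x v =
     bind_pmf (pmf_of_set {u. E v u}) (\<lambda>u.
       map_pmf (\<lambda>b. if b then x u else x v) (bernoulli_pmf (\<alpha> (x u))))"

definition round_step :: "nat \<Rightarrow> (nat \<Rightarrow> real) \<Rightarrow> (nat \<Rightarrow> nat \<Rightarrow> bool) \<Rightarrow> (nat \<Rightarrow> nat) \<Rightarrow> (nat \<Rightarrow> nat) pmf" where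
  "round_step n \<alpha> E x = Pi_pmf {1..n} 0 (node_step \<alpha> E x)"

text \<open>Distribution of the configuration after t rounds; the adversary Adv chooses the
  graph G_t of round t, possibly depending on the configuration at the start of the round.\<close>
primrec run :: "nat \<Rightarrow> (nat \<Rightarrow> real) \<Rightarrow> (nat \<Rightarrow> (nat \<Rightarrow> nat) \<Rightarrow> (nat \<Rightarrow> nat \<Rightarrow> bool))
    \<Rightarrow> (nat \<Rightarrow> nat) \<Rightarrow> nat \<Rightarrow> (nat \<Rightarrow> nat) pmf" where
  "run n \<alpha> Adv x0 0 = return_pmf x0"
| "run n \<alpha> Adv x0 (Suc t) = bind_pmf (run n \<alpha> Adv x0 t) (\<lambda>x. round_step n \<alpha> (Adv (Suc t) x) x)"

end

theory Submission
  imports Defs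
begin


lemma reg_edge: assumes "regular_graph n d E" "E u v" shows "u \<in> {1..n} \<and> v \<in> {1..n}"
proof -
  have "\<forall>u v. E u v \<longrightarrow> u \<in> {1..n} \<and> v \<in> {1..n}" using assms(1) unfolding regular_graph_def by (rule conjunct1)
  thus ?thesis using assms(2) by simp
qed
lemma reg_sym: assumes "regular_graph n d E" "E u v" shows "E v u"
proof -
  have "\<forall>u v. E u v \<longrightarrow> E v u" using assms(1) unfolding regular_graph_def by (elim conjE)
  thus ?thesis using assms(2) by simp
qed
lemma reg_irrefl: assumes "regular_graph n d E" shows "\<not> E u u"
proof -
  have "\<forall>u. \<not> E u u" using assms(1) unfolding regular_graph_def by (elim conjE)
  thus ?thesis by simp
qed
lemma reg_deg: assumes "regular_graph n d E" "v \<in> {1..n}" shows "card {u. E v u} = d"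
proof -
  have "\<forall>v\<in>{1..n}. card {u. E v u} = d" using assms(1) unfolding regular_graph_def by (elim conjE)
  thus ?thesis using assms(2) by simp
qed
lemma reg_conn: assumes "regular_graph n d E" "u \<in> {1..n}" "v \<in> {1..n}" shows "E\<^sup>*\<^sup>* u v"
proof -
  have "\<forall>u\<in>{1..n}. \<forall>v\<in>{1..n}. E\<^sup>*\<^sup>* u v" using assms(1) unfolding regular_graph_def by (elim conjE)
  thus ?thesis using assms(2,3) by simp
qed

lemma nbr_sub: "regular_graph n d E \<Longrightarrow> {u. E v u} \<subseteq> {1..n}"
  using reg_edge by (metis mem_Collect_eq subsetI)
lemma nbr_finite: "regular_graph n d E \<Longrightarrow> finite {u. E v u}"
  using nbr_sub finite_subset by (metis finite_atLeastAtMost)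

lemma d_pos: assumes "regular_graph n d E" "n \<ge> 2" shows "d > 0"
proof -
  have "E\<^sup>*\<^sup>* 1 2" using reg_conn[OF assms(1)] assms(2) by auto
  then obtain u where "E 1 u"
    by (cases rule: converse_rtranclpE) auto
  hence "{u. E 1 u} \<noteq> {}" by auto
  hence "card {u. E 1 u} > 0" using nbr_finite[OF assms(1)] by (simp add: card_gt_0_iff)
  thus ?thesis using reg_deg[OF assms(1), of 1] assms(2) by simp
qed

lemma num_edges_eq: assumes "regular_graph n d E" shows "2 * num_edges E = n * d"
proof -
  let ?D = "{(u,v). E u v}"
  have D: "?D = Sigma {1..n} (\<lambda>u. {v. E u v})" using reg_edge[OF assms] by auto
  have fin: "finite ?D" unfolding D using nbr_finite[OF assms] by auto
  have cardD: "card ?D = n * d" unfolding D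
    by (subst card_SigmaI) (auto simp: nbr_finite[OF assms] reg_deg[OF assms])
  let ?L = "{(u,v). E u v \<and> u < v}"
  let ?G = "{(u,v). E u v \<and> v < u}"
  have un: "?D = ?L \<union> ?G" proof
    show "?D \<subseteq> ?L \<union> ?G"
    proof
      fix p assume "p \<in> ?D"
      then obtain a b where p: "p = (a,b)" "E a b" by auto
      have "a \<noteq> b" using reg_irrefl[OF assms] p by blast
      hence "a < b \<or> b < a" by linarith
      thus "p \<in> ?L \<union> ?G" using p by auto
    qed
  qed auto
  have G: "?G = (\<lambda>(u,v). (v,u)) ` ?L" using reg_sym[OF assms] by auto
  have inj: "inj_on (\<lambda>(u,v). (v,u)) ?L" by (auto simp: inj_on_def)
  have fL: "finite ?L" by (rule finite_subset[OF _ fin]) auto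
  have fG: "finite ?G" by (rule finite_subset[OF _ fin]) auto
  have "card ?D = card ?L + card ?G"
    unfolding un by (rule card_Un_disjoint) (use fL fG in auto)
  also have "card ?G = card ?L" unfolding G using card_image[OF inj] .
  finally show ?thesis unfolding num_edges_def using cardD by simp
qed

lemma cut_sym:
  assumes "regular_graph n d E" "S \<subseteq> {1..n}"
  shows "(\<Sum>v\<in>S. out_deg n E S v) = (\<Sum>v\<in>{1..n}-S. out_deg n E ({1..n}-S) v)"
proof -
  have T: "{1..n} - ({1..n} - S) = S" using assms(2) by auto
  have fS: "finite S" using assms(2) finite_subset by blast
  have "(\<Sum>v\<in>S. out_deg n E S v) = card (Sigma S (\<lambda>v. {w \<in> {1..n} - S. E v w}))"
    unfolding out_deg_def by (subst card_SigmaI) (auto simp: fS)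
  also have "Sigma S (\<lambda>v. {w \<in> {1..n} - S. E v w}) = (\<lambda>(u,v). (v,u)) ` Sigma ({1..n}-S) (\<lambda>v. {w \<in> S. E v w})"
  proof (rule set_eqI, rule iffI)
    fix p assume "p \<in> Sigma S (\<lambda>v. {w \<in> {1..n} - S. E v w})"
    then obtain a b where p: "p = (a,b)" "a \<in> S" "b \<in> {1..n} - S" "E a b" by auto
    have "(b,a) \<in> Sigma ({1..n}-S) (\<lambda>v. {w \<in> S. E v w})" using p reg_sym[OF assms(1)] by auto
    moreover have "p = (\<lambda>(u,v). (v,u)) (b,a)" using p by simp
    ultimately show "p \<in> (\<lambda>(u,v). (v,u)) ` Sigma ({1..n}-S) (\<lambda>v. {w \<in> S. E v w})" by blast
  next
    fix p assume "p \<in> (\<lambda>(u,v). (v,u)) ` Sigma ({1..n}-S) (\<lambda>v. {w \<in> S. E v w})"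
    then obtain a b where p: "p = (b,a)" "a \<in> {1..n}-S" "b \<in> S" "E a b" by auto
    show "p \<in> Sigma S (\<lambda>v. {w \<in> {1..n} - S. E v w})" using p reg_sym[OF assms(1)] by auto
  qed
  also have "card \<dots> = card (Sigma ({1..n}-S) (\<lambda>v. {w \<in> S. E v w}))"
    by (rule card_image) (auto simp: inj_on_def)
  also have "\<dots> = (\<Sum>v\<in>{1..n}-S. out_deg n E ({1..n}-S) v)"
    unfolding out_deg_def T by (subst card_SigmaI) (simp_all add: fS)
  finally show ?thesis .
qed

lemma cond_le:
  assumes "regular_graph n d E" "n \<ge> 2" "U \<subseteq> {1..n}" "U \<noteq> {}" "2 * card U \<le> n"
  shows "conductance n d E \<le> (\<Sum>u\<in>U. real (out_deg n E U u)) / vol d U"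
proof -
  have dp: "d > 0" using d_pos assms by blast
  have fU: "finite U" using assms(3) finite_subset by blast
  have cU: "card U > 0" using fU assms(4) by (simp add: card_gt_0_iff)
  have "card U < n" using assms(5) cU by linarith
  hence prp: "U \<subset> {1..n}" using assms(3) by auto
  have ne: "2 * real (num_edges E) = real n * real d" using num_edges_eq[OF assms(1)]
    by (metis of_nat_mult of_nat_numeral)
  have "vol d U \<le> real (num_edges E)" unfolding vol_def
  proof -
    have "2 * (real d * real (card U)) \<le> real d * real n"
    proof -
      have "real (2 * card U) \<le> real n" using assms(5) by linarith
      hence "2 * real (card U) \<le> real n" by simp
      hence "real d * (2 * real (card U)) \<le> real d * real n" using dp by (intro mult_left_mono) auto
      thus ?thesis by (simp add: algebra_simps)
    qed
    thus "real d * real (card U) \<le> real (num_edges E)" using ne by (simp add: algebra_simps)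
  qed
  moreover have "0 < vol d U" unfolding vol_def using dp cU by simp
  ultimately have mem: "(\<Sum>u\<in>U. real (out_deg n E U u)) / vol d U \<in> {(\<Sum>u\<in>U. real (out_deg n E U u)) / vol d U | U.
      U \<subset> {1..n} \<and> 0 < vol d U \<and> vol d U \<le> real (num_edges E)}" using prp by blast
  have fin: "finite {(\<Sum>u\<in>U. real (out_deg n E U u)) / vol d U | U.
      U \<subset> {1..n} \<and> 0 < vol d U \<and> vol d U \<le> real (num_edges E)}"
  proof -
    have "{(\<Sum>u\<in>U. real (out_deg n E U u)) / vol d U | U.
      U \<subset> {1..n} \<and> 0 < vol d U \<and> vol d U \<le> real (num_edges E)} \<subseteq>
      (\<lambda>U. (\<Sum>u\<in>U. real (out_deg n E U u)) / vol d U) ` Pow {1..n}" by auto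
    thus ?thesis by (rule finite_subset) auto
  qed
  show ?thesis unfolding conductance_def by (rule Min_le[OF fin mem])
qed

lemma cut_bound:
  assumes "regular_graph n d E" "n \<ge> 2" "U \<subseteq> {1..n}" "U \<noteq> {}" "2 * card U \<le> n"
    and "\<phi> \<le> conductance n d E"
  shows "\<phi> * real d * real (card U) \<le> (\<Sum>u\<in>U. real (out_deg n E U u))"
proof -
  have dp: "d > 0" using d_pos assms by blast
  have fU: "finite U" using assms(3) finite_subset by blast
  have cU: "card U > 0" using fU assms(4) by (simp add: card_gt_0_iff)
  have "\<phi> \<le> (\<Sum>u\<in>U. real (out_deg n E U u)) / vol d U" using cond_le[OF assms(1-5)] assms(6) by linarith
  moreover have "vol d U > 0" unfolding vol_def using dp cU by simp
  ultimately show ?thesis unfolding vol_def by (simp add: pos_le_divide_eq mult.assoc)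
qed

lemma cond_le1:
  assumes "regular_graph n d E" "n \<ge> 2"
  shows "conductance n d E \<le> 1"
proof -
  have dp: "d > 0" using d_pos assms by blast
  have "conductance n d E \<le> (\<Sum>u\<in>{1}. real (out_deg n E {1} u)) / vol d {1}"
    by (rule cond_le[OF assms]) (use assms in auto)
  also have "\<dots> = real (out_deg n E {1} 1) / real d" by (simp add: vol_def)
  also have "out_deg n E {1} 1 \<le> d"
  proof -
    have "out_deg n E {1} 1 \<le> card {u. E 1 u}" unfolding out_deg_def
      by (rule card_mono[OF nbr_finite[OF assms(1)]]) auto
    thus ?thesis using reg_deg[OF assms(1), of 1] assms(2) by simp
  qed
  hence "real (out_deg n E {1} 1) / real d \<le> 1" using dp by simp
  finally show ?thesis .
qed




lemma pmf_map_bern: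
  assumes "0 \<le> p" "p \<le> 1"
  shows "pmf (map_pmf (\<lambda>b. if b then A else B) (bernoulli_pmf p)) z =
     (if A = z then p else 0) + (if B = z then 1 - p else 0)"
proof -
  have "pmf (map_pmf (\<lambda>b. if b then A else B) (bernoulli_pmf p)) z =
        measure (bernoulli_pmf p) ((\<lambda>b. if b then A else B) -` {z})" by (rule pmf_map)
  also have "(\<lambda>b. if b then A else B) -` {z} = (if A = z then {True} else {}) \<union> (if B = z then {False} else {})"
    by (cases "A = z"; cases "B = z") (auto split: if_splits)
  also have "measure (bernoulli_pmf p) \<dots> = (if A = z then p else 0) + (if B = z then 1 - p else 0)"
  proof -
    have T: "measure (bernoulli_pmf p) {True} = p" using assms by (simp add: measure_pmf_single)
    have F: "measure (bernoulli_pmf p) {False} = 1 - p" using assms by (simp add: measure_pmf_single)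
    have U: "measure (bernoulli_pmf p) {False, True} = 1"
    proof -
      have "{False, True} = (UNIV::bool set)" by auto
      thus ?thesis by simp
    qed
    show ?thesis
    proof (cases "A = z")
      case True
      show ?thesis
      proof (cases "B = z")
        case True2: True
        thus ?thesis using True U by simp
      next
        case False
        thus ?thesis using True T by simp
      qed
    next
      case False
      show ?thesis
      proof (cases "B = z")
        case True2: True
        thus ?thesis using False F by simp
      next
        case False2: False
        thus ?thesis using False by simp
      qed
    qed
  qed
  finally show ?thesis .
qed

lemma exp_ind:
  fixes p :: "'a pmf"
  shows "measure_pmf.expectation p (\<lambda>a. if a = z then 1 else (0::real)) = pmf p z"
proof -
  have e: "(\<lambda>a. if a = z then 1 else (0::real)) = indicator {z}" by (auto simp: indicator_def fun_eq_iff)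
  have "measure_pmf.expectation p (indicator {z}) = measure p {z}"
    by (simp only: Bochner_Integration.integral_indicator) simp
  also have "measure p {z} = pmf p z"
    by (simp add: measure_pmf_single)
  finally show ?thesis unfolding e .
qed

lemma exp_if:
  fixes p :: "'a pmf"
  shows "measure_pmf.expectation p (\<lambda>a. if a = z then \<theta> else (1::real)) = 1 - (1 - \<theta>) * pmf p z"
proof -
  have i1: "integrable (measure_pmf p) (\<lambda>a. if a = z then 1 else (0::real))"
    by (rule measure_pmf.integrable_const_bound[where B=1]) auto
  have "measure_pmf.expectation p (\<lambda>a. if a = z then \<theta> else (1::real)) =
        measure_pmf.expectation p (\<lambda>a. 1 - (1 - \<theta>) * (if a = z then 1 else (0::real)))"
    by (rule Bochner_Integration.integral_cong) auto
  also have "\<dots> = measure_pmf.expectation p (\<lambda>a. 1) - measure_pmf.expectation p (\<lambda>a. (1 - \<theta>) * (if a = z then 1 else (0::real)))"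
    by (rule Bochner_Integration.integral_diff[OF _ integrable_mult_right[OF i1]]) simp
  also have "measure_pmf.expectation p (\<lambda>a. (1 - \<theta>) * (if a = z then 1 else (0::real))) = (1 - \<theta>) * measure_pmf.expectation p (\<lambda>a. if a = z then 1 else (0::real))"
    by (rule Bochner_Integration.integral_mult_right_zero)
  also have "measure_pmf.expectation p (\<lambda>a. 1::real) = 1" by simp
  finally show ?thesis using exp_ind[of p z] by simp
qed

lemma prod_if_pow:
  assumes "finite A"
  shows "(\<Prod>v\<in>A. if y v = (0::nat) then \<theta> else (1::real)) = \<theta> ^ card {v\<in>A. y v = 0}"
proof -
  have "(\<Prod>v\<in>A. if y v = (0::nat) then \<theta> else (1::real)) = (\<Prod>v\<in>{v\<in>A. y v = 0}. \<theta>)"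
    using assms by (subst prod.If_cases) (auto intro: prod.cong simp: Int_def)
  thus ?thesis by simp
qed

lemma round_prod:
  assumes "\<theta> \<ge> 0"
  shows "measure_pmf.expectation (round_step n \<alpha> E x) (\<lambda>y. \<Prod>v\<in>{1..n}. if y v = (0::nat) then \<theta> else (1::real))
        = (\<Prod>v\<in>{1..n}. 1 - (1 - \<theta>) * pmf (node_step \<alpha> E x v) 0)"
proof -
  have "measure_pmf.expectation (round_step n \<alpha> E x) (\<lambda>y. \<Prod>v\<in>{1..n}. if y v = (0::nat) then \<theta> else (1::real))
     = (\<Prod>v\<in>{1..n}. measure_pmf.expectation (node_step \<alpha> E x v) (\<lambda>a. if a = (0::nat) then \<theta> else (1::real)))"
    unfolding round_step_def
  proof (rule expectation_prod_Pi_pmf[where f="\<lambda>_ a. if a = (0::nat) then \<theta> else (1::real)"])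
    show "finite {1..n}" by simp
    fix v
    show "integrable (measure_pmf (node_step \<alpha> E x v)) (\<lambda>a. if a = (0::nat) then \<theta> else (1::real))"
      by (rule measure_pmf.integrable_const_bound[where B="max \<theta> 1"]) (use assms in auto)
    fix a
    show "0 \<le> (if a = (0::nat) then \<theta> else (1::real))" using assms by simp
  qed
  also have "\<dots> = (\<Prod>v\<in>{1..n}. 1 - (1 - \<theta>) * pmf (node_step \<alpha> E x v) 0)"
    by (simp add: exp_if)
  finally show ?thesis .
qed

lemma node_pmf:
  assumes "finite {u. E v u}" "{u. E v u} \<noteq> {}"
  shows "pmf (node_step \<alpha> E x v) z =
     (\<Sum>u\<in>{u. E v u}. pmf (map_pmf (\<lambda>b. if b then x u else x v) (bernoulli_pmf (\<alpha> (x u)))) z) / real (card {u. E v u})"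
  unfolding node_step_def by (rule pmf_bind_pmf_of_set[OF assms(2) assms(1)])




definition Zs :: "nat \<Rightarrow> (nat \<Rightarrow> nat) \<Rightarrow> nat set" where "Zs n y = {v\<in>{1..n}. y v = 0}"

lemma sum_ind_card: "finite N \<Longrightarrow> (\<Sum>u\<in>N. if P u then 1 else (0::real)) = real (card {u\<in>N. P u})"
proof -
  assume f: "finite N"
  have "(\<Sum>u\<in>N. if P u then 1 else (0::real)) = (\<Sum>u\<in>{u\<in>N. P u}. 1)"
    using f by (subst sum.If_cases) (simp_all add: Int_def)
  thus ?thesis by simp
qed

lemma node_S:
  assumes reg: "regular_graph n d E" and n2: "n \<ge> 2"
    and xk: "\<forall>v\<in>{1..n}. x v < \<kappa>" and a0: "\<alpha> 0 = 1"
    and aa: "\<forall>i. 1 \<le> i \<and> i < \<kappa> \<longrightarrow> 0 \<le> \<alpha> i \<and> \<alpha> i \<le> 1 - e"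
    and e0: "0 \<le> e"
    and v: "v \<in> {1..n}" "x v = 0"
  shows "pmf (node_step \<alpha> E x v) 0 \<ge> 1 - (1 - e) * real (out_deg n E (Zs n x) v) / real d"
proof -
  let ?N = "{u. E v u}"
  have dp: "d > 0" using d_pos reg n2 by blast
  have cN: "card ?N = d" using reg_deg[OF reg v(1)] .
  have fN: "finite ?N" using nbr_finite[OF reg] .
  have neN: "?N \<noteq> {}" using cN dp card_gt_0_iff by blast
  let ?g = "\<lambda>u. pmf (map_pmf (\<lambda>b. if b then x u else x v) (bernoulli_pmf (\<alpha> (x u)))) 0"
  have pm: "pmf (node_step \<alpha> E x v) 0 = (\<Sum>u\<in>?N. ?g u) / real d"
    using node_pmf[where E=E and v=v and \<alpha>=\<alpha> and x=x and z=0] fN neN cN by simp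
  have gb: "?g u \<ge> 1 - (1 - e) * (if x u \<noteq> 0 then 1 else 0)" if u: "u \<in> ?N" for u
  proof -
    have un: "u \<in> {1..n}" using reg_edge[OF reg] u by blast
    show ?thesis
    proof (cases "x u = 0")
      case True
      thus ?thesis using a0 v(2) by (subst pmf_map_bern) auto
    next
      case False
      hence "1 \<le> x u" "x u < \<kappa>" using xk un by auto
      hence al: "0 \<le> \<alpha> (x u)" "\<alpha> (x u) \<le> 1 - e" using aa by auto
      have "?g u = 1 - \<alpha> (x u)" using False v(2) al e0 by (subst pmf_map_bern) auto
      thus ?thesis using False al by simp
    qed
  qed
  have "(\<Sum>u\<in>?N. ?g u) \<ge> (\<Sum>u\<in>?N. 1 - (1 - e) * (if x u \<noteq> 0 then 1 else 0))"
    by (rule sum_mono) (use gb in auto)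
  also have "(\<Sum>u\<in>?N. 1 - (1 - e) * (if x u \<noteq> 0 then 1 else 0)) =
      real d - (1 - e) * (\<Sum>u\<in>?N. if x u \<noteq> 0 then 1 else (0::real))"
    by (simp add: sum_subtractf sum_distrib_left cN)
  also have "(\<Sum>u\<in>?N. if x u \<noteq> 0 then 1 else (0::real)) = real (card {u\<in>?N. x u \<noteq> 0})"
    using sum_ind_card[OF fN] .
  also have "{u\<in>?N. x u \<noteq> 0} = {w \<in> {1..n} - Zs n x. E v w}"
    using reg_edge[OF reg] by (auto simp: Zs_def)
  finally have "real d - (1 - e) * real (out_deg n E (Zs n x) v) \<le> (\<Sum>u\<in>?N. ?g u)"
    unfolding out_deg_def .
  hence "(real d - (1 - e) * real (out_deg n E (Zs n x) v)) / real d \<le> (\<Sum>u\<in>?N. ?g u) / real d"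
    using dp by (intro divide_right_mono) auto
  moreover have "(real d - (1 - e) * real (out_deg n E (Zs n x) v)) / real d = 1 - (1 - e) * real (out_deg n E (Zs n x) v) / real d"
    using dp by (simp add: field_simps)
  ultimately show ?thesis using pm by simp
qed

lemma node_T:
  assumes reg: "regular_graph n d E" and n2: "n \<ge> 2"
    and a0: "\<alpha> 0 = 1"
    and v: "v \<in> {1..n}" "x v \<noteq> 0"
  shows "pmf (node_step \<alpha> E x v) 0 \<ge> real (out_deg n E ({1..n} - Zs n x) v) / real d"
proof -
  let ?N = "{u. E v u}"
  have dp: "d > 0" using d_pos reg n2 by blast
  have cN: "card ?N = d" using reg_deg[OF reg v(1)] .
  have fN: "finite ?N" using nbr_finite[OF reg] .
  have neN: "?N \<noteq> {}" using cN dp card_gt_0_iff by blast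
  let ?g = "\<lambda>u. pmf (map_pmf (\<lambda>b. if b then x u else x v) (bernoulli_pmf (\<alpha> (x u)))) 0"
  have pm: "pmf (node_step \<alpha> E x v) 0 = (\<Sum>u\<in>?N. ?g u) / real d"
    using node_pmf[where E=E and v=v and \<alpha>=\<alpha> and x=x and z=0] fN neN cN by simp
  have gb: "?g u = (if x u = 0 then 1 else 0)" for u
  proof (cases "x u = 0")
    case True
    thus ?thesis using a0 v(2) by (subst pmf_map_bern) auto
  next
    case False
    have "(\<lambda>b. if b then x u else x v) -` {0} = {}" using False v(2) by (auto split: if_splits)
    thus ?thesis using False by (simp add: pmf_map)
  qed
  have "(\<Sum>u\<in>?N. ?g u) = real (card {u\<in>?N. x u = 0})"
    using sum_ind_card[OF fN] gb by simp
  also have "{u\<in>?N. x u = 0} = {w \<in> {1..n} - ({1..n} - Zs n x). E v w}"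
    using reg_edge[OF reg] by (auto simp: Zs_def)
  finally show ?thesis using pm unfolding out_deg_def by simp
qed




lemma one_minus_exp_neg: fixes s :: real assumes "0 \<le> s" "s \<le> 1" shows "s / 2 \<le> 1 - exp (- s)"
proof -
  have "1 + s \<le> exp s" by (rule exp_ge_add_one_self)
  hence "exp (- s) \<le> 1 / (1 + s)" using assms by (simp add: exp_minus field_simps)
  also have "1 / (1 + s) \<le> 1 - s / 2" using assms by (simp add: field_simps) (simp add: algebra_simps power2_eq_square mult_left_le[of s s] )
  finally show ?thesis by simp
qed

lemma rate_bound:
  fixes e s :: real
  assumes e: "0 < e" "e \<le> 1/2" and s: "0 < s" "s \<le> e / 4"
  shows "e * s / 4 \<le> (1 - exp (- s)) * (1 - (1 - e) / exp (- s))"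
proof -
  have s1: "s / 2 \<le> 1 - exp (- s)" using one_minus_exp_neg[of s] s e by simp
  have "exp s \<le> 1 + 2 * s" using real_exp_bound_lemma[of s] s e by simp
  hence "(1 - e) * exp s \<le> (1 - e) * (1 + 2 * s)" using e by (intro mult_left_mono) auto
  also have "\<dots> \<le> (1 - e) * (1 + e / 2)" using e s by (intro mult_left_mono) auto
  also have "\<dots> \<le> 1 - e / 2" using e by (simp add: algebra_simps)
  moreover have "(1 - e) / exp (- s) = (1 - e) * exp s" by (simp add: exp_minus field_simps)
  ultimately have "(1 - e) / exp (- s) \<le> 1 - e / 2" by simp
  hence s2: "e / 2 \<le> 1 - (1 - e) / exp (- s)" by linarith
  have "e * s / 4 = (s / 2) * (e / 2)" by simp
  also have "\<dots> \<le> (1 - exp (- s)) * (1 - (1 - e) / exp (- s))"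
    using s1 s2 s e by (intro mult_mono) auto
  finally show ?thesis .
qed

lemma cut_min:
  assumes reg: "regular_graph n d E" and n2: "n \<ge> 2" and cond: "\<phi> \<le> conductance n d E"
  shows "max \<phi> 0 * real (min (card (Zs n x)) (n - card (Zs n x))) * real d
     \<le> (\<Sum>v\<in>Zs n x. real (out_deg n E (Zs n x) v))"
proof -
  let ?S = "Zs n x"
  have Ssub: "?S \<subseteq> {1..n}" unfolding Zs_def by auto
  have fS: "finite ?S" using Ssub finite_subset by blast
  have cT: "card ({1..n} - ?S) = n - card ?S" using Ssub by (simp add: card_Diff_subset fS)
  have C0: "0 \<le> (\<Sum>v\<in>?S. real (out_deg n E ?S v))" by (simp add: sum_nonneg)
  show ?thesis
  proof (cases "\<phi> \<le> 0 \<or> card ?S = 0 \<or> card ?S = n")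
    case True
    hence "max \<phi> 0 * real (min (card ?S) (n - card ?S)) * real d = 0" by auto
    thus ?thesis using C0 by linarith
  next
    case False
    hence ph: "max \<phi> 0 = \<phi>" and c1: "card ?S \<noteq> 0" and c2: "card ?S \<noteq> n" by auto
    have ne: "?S \<noteq> {}" using c1 by auto
    have cle: "card ?S \<le> n" using card_mono[OF _ Ssub] by simp
    show ?thesis
    proof (cases "2 * card ?S \<le> n")
      case True
      have "\<phi> * real d * real (card ?S) \<le> (\<Sum>v\<in>?S. real (out_deg n E ?S v))"
        by (rule cut_bound[OF reg n2 Ssub ne True cond])
      moreover have "min (card ?S) (n - card ?S) = card ?S" using True by simp
      ultimately show ?thesis using ph by (simp add: algebra_simps)
    next
      case False
      have Tsub: "{1..n} - ?S \<subseteq> {1..n}" by auto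
      have "card ({1..n} - ?S) > 0" using cT c2 cle by simp
      hence Tne: "{1..n} - ?S \<noteq> {}" using card_gt_0_iff by blast
      have T2: "2 * card ({1..n} - ?S) \<le> n" using False cT by simp
      have "\<phi> * real d * real (card ({1..n} - ?S)) \<le> (\<Sum>v\<in>{1..n} - ?S. real (out_deg n E ({1..n} - ?S) v))"
        by (rule cut_bound[OF reg n2 Tsub Tne T2 cond])
      also have "\<dots> = (\<Sum>v\<in>?S. real (out_deg n E ?S v))"
      proof -
        have eq: "(\<Sum>v\<in>?S. out_deg n E ?S v) = (\<Sum>v\<in>{1..n}-?S. out_deg n E ({1..n}-?S) v)"
          by (rule cut_sym[OF reg Ssub])
        have "real (\<Sum>v\<in>?S. out_deg n E ?S v) = real (\<Sum>v\<in>{1..n}-?S. out_deg n E ({1..n}-?S) v)"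
          using eq by simp
        thus ?thesis by (simp only: of_nat_sum)
      qed
      finally have "\<phi> * real d * real (n - card ?S) \<le> (\<Sum>v\<in>?S. real (out_deg n E ?S v))" using cT by simp
      moreover have "min (card ?S) (n - card ?S) = n - card ?S" using False by simp
      ultimately show ?thesis using ph by (simp add: algebra_simps)
    qed
  qed
qed




lemma round_exp:
  fixes e s \<phi> :: real
  assumes reg: "regular_graph n d E" and n2: "n \<ge> 2" and cond: "\<phi> \<le> conductance n d E"
    and xk: "\<forall>v\<in>{1..n}. x v < \<kappa>" and a0: "\<alpha> 0 = 1"
    and aa: "\<forall>i. 1 \<le> i \<and> i < \<kappa> \<longrightarrow> 0 \<le> \<alpha> i \<and> \<alpha> i \<le> 1 - e"
    and e: "0 < e" "e \<le> 1/2" and s: "0 < s" "s \<le> e / 4"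
  shows "measure_pmf.expectation (round_step n \<alpha> E x) (\<lambda>y. exp (- s * real (card (Zs n y))))
     \<le> exp (- s * real (card (Zs n x)) - e * s / 4 * (max \<phi> 0 * real (min (card (Zs n x)) (n - card (Zs n x)))))"
proof -
  define \<theta> where "\<theta> = exp (- s)"
  let ?S = "Zs n x"
  let ?T = "{1..n} - Zs n x"
  define P where "P v = pmf (node_step \<alpha> E x v) 0" for v
  define a where "a v = real (out_deg n E ?S v)" for v
  define b where "b v = real (out_deg n E ?T v)" for v
  define C where "C = (\<Sum>v\<in>?S. a v)"
  define X where "X = card ?S"
  have dp: "d > 0" using d_pos reg n2 by blast
  hence dr: "real d > 0" by simp
  have th0: "0 < \<theta>" unfolding \<theta>_def by simp
  have th1: "\<theta> < 1" unfolding \<theta>_def using s by simp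
  have Ssub: "?S \<subseteq> {1..n}" unfolding Zs_def by auto
  have fS: "finite ?S" using Ssub finite_subset by blast
  have C0: "0 \<le> C" unfolding C_def a_def by (simp add: sum_nonneg)
  have CT: "C = (\<Sum>v\<in>?T. b v)"
  proof -
    have eq: "(\<Sum>v\<in>?S. out_deg n E ?S v) = (\<Sum>v\<in>?T. out_deg n E ?T v)"
      by (rule cut_sym[OF reg Ssub])
    have "real (\<Sum>v\<in>?S. out_deg n E ?S v) = real (\<Sum>v\<in>?T. out_deg n E ?T v)"
      using eq by simp
    thus ?thesis unfolding C_def a_def b_def by (simp only: of_nat_sum)
  qed
  have funeq: "(\<lambda>y. exp (- s * real (card (Zs n y)))) = (\<lambda>y. \<Prod>v\<in>{1..n}. if y v = (0::nat) then \<theta> else 1)"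
  proof (rule ext)
    fix y :: "nat \<Rightarrow> nat"
    have "(\<Prod>v\<in>{1..n}. if y v = (0::nat) then \<theta> else 1) = \<theta> ^ card (Zs n y)"
      using prod_if_pow[of "{1..n}" y \<theta>] by (simp add: Zs_def)
    also have "\<dots> = exp (real (card (Zs n y)) * (- s))" unfolding \<theta>_def by (rule exp_of_nat_mult[symmetric])
    finally show "exp (- s * real (card (Zs n y))) = (\<Prod>v\<in>{1..n}. if y v = (0::nat) then \<theta> else 1)"
      by (simp add: mult.commute)
  qed
  have Eq: "measure_pmf.expectation (round_step n \<alpha> E x) (\<lambda>y. exp (- s * real (card (Zs n y))))
      = (\<Prod>v\<in>{1..n}. 1 - (1 - \<theta>) * P v)"
    unfolding funeq P_def using round_prod[of \<theta> n \<alpha> E x] th0 by simp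
  define r where "r = (1 - \<theta>) * (1 - e) / (\<theta> * real d)"
  have fSb: "0 \<le> 1 - (1 - \<theta>) * P v \<and> 1 - (1 - \<theta>) * P v \<le> \<theta> * exp (r * a v)" if v: "v \<in> ?S" for v
  proof -
    have vn: "v \<in> {1..n}" "x v = 0" using v unfolding Zs_def by auto
    have Pl: "P v \<ge> 1 - (1 - e) * a v / real d"
      unfolding P_def a_def using node_S[where n=n and d=d and E=E and \<alpha>=\<alpha> and v=v and x=x and \<kappa>=\<kappa> and e=e] reg n2 xk a0 aa vn e by simp
    have P1: "P v \<le> 1" unfolding P_def by (rule pmf_le_1)
    have "(1 - \<theta>) * P v \<le> 1 - \<theta>" using P1 th1 by (simp add: mult_left_le)
    hence nn: "0 \<le> 1 - (1 - \<theta>) * P v" using th0 by linarith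
    have "(1 - \<theta>) * (1 - (1 - e) * a v / real d) \<le> (1 - \<theta>) * P v"
      using Pl th1 by (intro mult_left_mono) auto
    hence "1 - (1 - \<theta>) * P v \<le> 1 - (1 - \<theta>) * (1 - (1 - e) * a v / real d)" by linarith
    also have "\<dots> = \<theta> * (1 + r * a v)" unfolding r_def using th0 dr by (simp add: field_simps)
    also have "\<dots> \<le> \<theta> * exp (r * a v)" using th0 by (intro mult_left_mono exp_ge_add_one_self) auto
    finally show ?thesis using nn by simp
  qed
  have fTb: "0 \<le> 1 - (1 - \<theta>) * P v \<and> 1 - (1 - \<theta>) * P v \<le> exp (- ((1 - \<theta>) / real d) * b v)" if v: "v \<in> ?T" for v
  proof -
    have vn: "v \<in> {1..n}" "x v \<noteq> 0" using v unfolding Zs_def by auto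
    have Pl: "P v \<ge> b v / real d"
      unfolding P_def b_def using node_T[where n=n and d=d and E=E and \<alpha>=\<alpha> and v=v and x=x] reg n2 a0 vn by simp
    have P1: "P v \<le> 1" unfolding P_def by (rule pmf_le_1)
    have "(1 - \<theta>) * P v \<le> 1 - \<theta>" using P1 th1 by (simp add: mult_left_le)
    hence nn: "0 \<le> 1 - (1 - \<theta>) * P v" using th0 by linarith
    have "(1 - \<theta>) * (b v / real d) \<le> (1 - \<theta>) * P v"
      using Pl th1 by (intro mult_left_mono) auto
    hence "1 - (1 - \<theta>) * P v \<le> 1 + (- ((1 - \<theta>) / real d) * b v)" by (simp add: field_simps)
    also have "\<dots> \<le> exp (- ((1 - \<theta>) / real d) * b v)" by (rule exp_ge_add_one_self)
    finally show ?thesis using nn by simp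
  qed
  have split: "(\<Prod>v\<in>{1..n}. 1 - (1 - \<theta>) * P v) = (\<Prod>v\<in>?T. 1 - (1 - \<theta>) * P v) * (\<Prod>v\<in>?S. 1 - (1 - \<theta>) * P v)"
    by (rule prod.subset_diff[OF Ssub]) simp
  have pS: "(\<Prod>v\<in>?S. 1 - (1 - \<theta>) * P v) \<le> (\<Prod>v\<in>?S. \<theta> * exp (r * a v))"
    by (rule prod_mono) (use fSb in blast)
  also have "\<dots> = \<theta> ^ X * exp (r * C)"
    unfolding X_def C_def by (simp add: prod.distrib exp_sum fS sum_distrib_left)
  finally have pS': "(\<Prod>v\<in>?S. 1 - (1 - \<theta>) * P v) \<le> \<theta> ^ X * exp (r * C)" .
  have pT: "(\<Prod>v\<in>?T. 1 - (1 - \<theta>) * P v) \<le> (\<Prod>v\<in>?T. exp (- ((1 - \<theta>) / real d) * b v))"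
    by (rule prod_mono) (use fTb in blast)
  also have "\<dots> = exp (- ((1 - \<theta>) / real d) * C)"
    unfolding CT by (simp add: exp_sum sum_distrib_left)
  finally have pT': "(\<Prod>v\<in>?T. 1 - (1 - \<theta>) * P v) \<le> exp (- ((1 - \<theta>) / real d) * C)" .
  have nT: "0 \<le> (\<Prod>v\<in>?T. 1 - (1 - \<theta>) * P v)" by (rule prod_nonneg) (use fTb in blast)
  have nS: "0 \<le> (\<Prod>v\<in>?S. 1 - (1 - \<theta>) * P v)" by (rule prod_nonneg) (use fSb in blast)
  have "(\<Prod>v\<in>{1..n}. 1 - (1 - \<theta>) * P v) \<le> exp (- ((1 - \<theta>) / real d) * C) * (\<theta> ^ X * exp (r * C))"
    unfolding split by (rule mult_mono[OF pT' pS' _ nS]) simp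
  also have "\<dots> = exp (- ((1 - \<theta>) / real d) * C + (- s * real X + r * C))"
  proof -
    have tX: "\<theta> ^ X = exp (- s * real X)" unfolding \<theta>_def using exp_of_nat_mult[of X "-s"] by (simp add: mult.commute)
    show ?thesis by (simp only: tX exp_add)
  qed
  also have "\<dots> = exp (- s * real X + (r - (1 - \<theta>) / real d) * C)"
    by (rule arg_cong[where f=exp]) (simp add: algebra_simps)
  also have "(r - (1 - \<theta>) / real d) * C = - ((1 - \<theta>) * (1 - (1 - e) / \<theta>)) * (C / real d)"
    unfolding r_def using th0 dr by (simp add: field_simps)
  also have "- ((1 - \<theta>) * (1 - (1 - e) / \<theta>)) * (C / real d) \<le> - (e * s / 4) * (C / real d)"
  proof -
    have "e * s / 4 \<le> (1 - \<theta>) * (1 - (1 - e) / \<theta>)" unfolding \<theta>_def by (rule rate_bound[OF e s])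
    moreover have "0 \<le> C / real d" using C0 dr by simp
    ultimately show ?thesis by (intro mult_right_mono) auto
  qed
  also have "- (e * s / 4) * (C / real d) \<le> - (e * s / 4) * (max \<phi> 0 * real (min X (n - X)))"
  proof -
    have "max \<phi> 0 * real (min X (n - X)) * real d \<le> C"
      unfolding X_def C_def a_def by (rule cut_min[OF reg n2 cond])
    hence "max \<phi> 0 * real (min X (n - X)) \<le> C / real d" using dr by (simp add: field_simps)
    moreover have "0 \<le> e * s / 4" using e s by simp
    ultimately show ?thesis by (intro mult_left_mono_neg) auto
  qed
  finally show ?thesis unfolding Eq X_def by (simp add: algebra_simps)
qed




definition sj :: "real \<Rightarrow> nat \<Rightarrow> real" where "sj s0 j = s0 / 2 ^ j"

definition G :: "real \<Rightarrow> nat \<Rightarrow> nat \<Rightarrow> real \<Rightarrow> real" where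
  "G s0 J n X = (\<Sum>j\<le>J. sj s0 j * (exp (- sj s0 j * X) - exp (- sj s0 j * real n)))"

lemma sj_pos: "s0 > 0 \<Longrightarrow> sj s0 j > 0" unfolding sj_def by simp
lemma sj_le: "s0 \<ge> 0 \<Longrightarrow> sj s0 j \<le> s0" unfolding sj_def by (simp add: divide_le_eq one_le_power order.trans[OF _ mult_left_mono[of 1]])
lemma sj_Suc: "sj s0 (Suc j) = sj s0 j / 2" unfolding sj_def by simp

lemma sum_sj: "(\<Sum>j\<le>J. sj s0 j) = 2 * s0 - s0 / 2 ^ J"
proof (induction J)
  case 0 thus ?case by (simp add: sj_def)
next
  case (Suc J)
  thus ?case by (simp add: sj_def field_simps)
qed

lemma key_ineq: fixes y :: real assumes "0 \<le> y" shows "y * exp (- y) \<le> 2 * (exp (- y / 2) - exp (- y))"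
proof -
  have "1 + y / 2 \<le> exp (y / 2)" by (rule exp_ge_add_one_self)
  hence "y \<le> 2 * exp (y / 2) - 2" by linarith
  hence "y \<le> 2 * (exp (y / 2) - 1)" by simp
  hence "y * exp (- y) \<le> 2 * (exp (y / 2) - 1) * exp (- y)" by (intro mult_right_mono) auto
  also have "\<dots> = 2 * (exp (y / 2) * exp (- y) - exp (- y))" by (simp add: algebra_simps)
  also have "exp (y / 2) * exp (- y) = exp (- y / 2)" by (simp flip: exp_add)
  finally show ?thesis .
qed

lemma tele:
  fixes X s0 :: real assumes "X > 0" "s0 \<ge> 0"
  shows "(\<Sum>j\<le>J. sj s0 j * exp (- sj s0 j * X)) \<le> (2 / X) * (exp (- sj s0 (Suc J) * X) - exp (- s0 * X))"
proof (induction J)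
  case 0
  have "sj s0 0 * X * exp (- (sj s0 0 * X)) \<le> 2 * (exp (- (sj s0 0 * X) / 2) - exp (- (sj s0 0 * X)))"
    by (rule key_ineq) (use assms in \<open>simp add: sj_def\<close>)
  hence "sj s0 0 * exp (- sj s0 0 * X) \<le> (2 / X) * (exp (- sj s0 (Suc 0) * X) - exp (- s0 * X))"
    using assms by (simp add: sj_def field_simps)
  thus ?case by simp
next
  case (Suc J)
  have "sj s0 (Suc J) * X * exp (- (sj s0 (Suc J) * X)) \<le> 2 * (exp (- (sj s0 (Suc J) * X) / 2) - exp (- (sj s0 (Suc J) * X)))"
    by (rule key_ineq) (use assms in \<open>simp add: sj_def\<close>)
  hence t: "sj s0 (Suc J) * exp (- sj s0 (Suc J) * X) \<le> (2 / X) * (exp (- sj s0 (Suc (Suc J)) * X) - exp (- sj s0 (Suc J) * X))"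
    using assms by (simp add: sj_Suc field_simps)
  show ?case using Suc t by (simp add: algebra_simps)
qed

lemma tele2:
  fixes X s0 :: real assumes "X > 0" "s0 \<ge> 0"
  shows "(\<Sum>j\<le>J. sj s0 j * exp (- sj s0 j * X)) \<le> 2 / X"
proof -
  have "0 \<le> sj s0 (Suc J) * X" using assms by (simp add: sj_def)
  hence "exp (- sj s0 (Suc J) * X) \<le> 1" by simp
  hence "exp (- sj s0 (Suc J) * X) - exp (- s0 * X) \<le> 1" using exp_gt_zero[of "- s0 * X"] by linarith
  hence "(2 / X) * (exp (- sj s0 (Suc J) * X) - exp (- s0 * X)) \<le> (2 / X) * 1"
    using assms by (intro mult_left_mono) auto
  hence "(2 / X) * (exp (- sj s0 (Suc J) * X) - exp (- s0 * X)) \<le> 2 / X" by simp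
  thus ?thesis using tele[OF assms, of J] by linarith
qed

lemma pow_interval: fixes y :: real assumes "1 \<le> y" shows "\<exists>k. 2 ^ k \<le> y \<and> y < 2 ^ Suc k"
proof -
  obtain m where m: "y < 2 ^ m" using real_arch_pow[of 2 y] by auto
  define k where "k = (LEAST k. y < 2 ^ Suc k)"
  have "(2::real) ^ m \<le> 2 ^ Suc m" by simp
  hence ex: "y < 2 ^ Suc m" using m by linarith
  have k1: "y < 2 ^ Suc k" unfolding k_def by (rule LeastI[of _ m]) (use ex in simp)
  have k2: "2 ^ k \<le> y"
  proof (cases k)
    case 0 thus ?thesis using assms by simp
  next
    case (Suc k')
    have "\<not> y < 2 ^ Suc k'" using not_less_Least[of k' "\<lambda>k. y < 2 ^ Suc k"] Suc k_def by simp
    thus ?thesis using Suc by simp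
  qed
  show ?thesis using k1 k2 by blast
qed

lemma conv_exp: fixes l z :: real assumes "0 \<le> l" "l \<le> 1" shows "exp (l * z) - 1 \<le> l * (exp z - 1)"
proof -
  have "exp ((1 - l) *\<^sub>R 0 + l *\<^sub>R z) \<le> (1 - l) * exp 0 + l * exp z"
    by (rule convex_onD[OF exp_convex]) (use assms in auto)
  thus ?thesis by (simp add: algebra_simps)
qed

lemma phase2_term:
  fixes s Y N e \<phi> :: real
  assumes "0 < s" "0 \<le> Y" "0 \<le> \<phi>" "\<phi> \<le> 1" "0 < e" "e \<le> 1/2"
  shows "exp (- s * (N - Y) - e * s / 4 * (\<phi> * Y)) - exp (- s * N) \<le> (1 - e * \<phi> / 4) * (exp (- s * (N - Y)) - exp (- s * N))"
proof -
  let ?l = "1 - e * \<phi> / 4"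
  have "e * \<phi> \<le> (1/2) * 1" by (rule mult_mono) (use assms in auto)
  hence l: "0 \<le> ?l" "?l \<le> 1" using assms by auto
  have "exp (?l * (s * Y)) - 1 \<le> ?l * (exp (s * Y) - 1)" by (rule conv_exp[OF l])
  hence "exp (- s * N) * (exp (?l * (s * Y)) - 1) \<le> exp (- s * N) * (?l * (exp (s * Y) - 1))"
    by (intro mult_left_mono) auto
  moreover have "exp (- s * N) * (exp (?l * (s * Y)) - 1) = exp (- s * (N - Y) - e * s / 4 * (\<phi> * Y)) - exp (- s * N)"
    by (simp add: algebra_simps flip: exp_add)
  moreover have "exp (- s * N) * (?l * (exp (s * Y) - 1)) = ?l * (exp (- s * (N - Y)) - exp (- s * N))"
  proof -
    have ee: "exp (- s * N) * exp (s * Y) = exp (- s * (N - Y))" by (simp flip: exp_add add: algebra_simps)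
    have "exp (- s * N) * (?l * (exp (s * Y) - 1)) = ?l * (exp (- s * N) * exp (s * Y) - exp (- s * N))"
      by (simp only: algebra_simps)
    thus ?thesis by (simp only: ee)
  qed
  ultimately show ?thesis by linarith
qed




lemma one_minus_exp_neg2: fixes s :: real assumes "0 \<le> s" "s \<le> 1" shows "s / 2 \<le> 1 - exp (- s)"
proof -
  have "1 + s \<le> exp s" by (rule exp_ge_add_one_self)
  hence "exp (- s) \<le> 1 / (1 + s)" using assms by (simp add: exp_minus field_simps)
  also have "1 / (1 + s) \<le> 1 - s / 2"
  proof -
    have "s * s \<le> s * 1" using assms by (intro mult_left_mono) auto
    hence "1 \<le> (1 - s / 2) * (1 + s)" by (simp add: algebra_simps)
    thus ?thesis using assms by (simp add: divide_le_eq)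
  qed
  finally show ?thesis by simp
qed

lemma term_lb:
  fixes s e \<phi> X :: real
  assumes "0 < s" "0 < e" "e \<le> 1/2" "0 \<le> \<phi>" "\<phi> \<le> 1" "0 < X" "s * X \<le> 2"
  shows "exp (- 2) * e * s\<^sup>2 * \<phi> * X / 8 \<le> s * exp (- s * X) * (1 - exp (- (e * s / 4) * (\<phi> * X)))"
proof -
  let ?y = "(e * s / 4) * (\<phi> * X)"
  have y0: "0 \<le> ?y" using assms by simp
  have "?y = (e / 4) * \<phi> * (s * X)" by (simp add: algebra_simps)
  also have "\<dots> \<le> (1/8) * 1 * 2"
    using assms by (intro mult_mono) auto
  finally have y1: "?y \<le> 1" by simp
  have ey: "?y / 2 \<le> 1 - exp (- ?y)" by (rule one_minus_exp_neg2[OF y0 y1])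
  have ex: "exp (- 2) \<le> exp (- s * X)" using assms by simp
  have "exp (- 2) * e * s\<^sup>2 * \<phi> * X / 8 = s * exp (- 2) * (?y / 2)" by (simp add: power2_eq_square algebra_simps)
  also have "\<dots> \<le> s * exp (- s * X) * (1 - exp (- ?y))"
    using assms ex ey y0 by (intro mult_mono) auto
  finally show ?thesis by simp
qed

lemma term_id:
  fixes s e \<phi> X N :: real
  shows "s * (exp (- s * X - e * s / 4 * (\<phi> * X)) - exp (- s * N)) =
    s * (exp (- s * X) - exp (- s * N)) - s * exp (- s * X) * (1 - exp (- (e * s / 4) * (\<phi> * X)))"
proof -
  have "exp (- s * X - e * s / 4 * (\<phi> * X)) = exp (- s * X) * exp (- (e * s / 4) * (\<phi> * X))"
    by (simp flip: exp_add add: algebra_simps)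
  thus ?thesis by (simp add: algebra_simps)
qed

lemma G_step:
  fixes e \<phi> :: real and n X J :: nat
  assumes e: "0 < e" "e \<le> 1/2" and ph: "0 \<le> \<phi>" "\<phi> \<le> 1" and X: "1 \<le> X" "X \<le> n" and J: "n < 2 ^ J"
  shows "(\<Sum>j\<le>J. sj (e/4) j * (exp (- sj (e/4) j * real X - e * sj (e/4) j / 4 * (\<phi> * real (min X (n - X)))) - exp (- sj (e/4) j * real n)))
       \<le> (1 - (e * (e/4)\<^sup>2 / (16 * exp 2)) * \<phi>) * G (e/4) J n (real X)"
proof -
  define s0 where "s0 = e / 4"
  define \<delta> where "\<delta> = e * s0\<^sup>2 / (16 * exp 2)"
  have s0: "0 < s0" "s0 \<le> 1/8" using e unfolding s0_def by auto
  have spos: "sj s0 j > 0" for j using sj_pos[OF s0(1)] .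
  have sle: "sj s0 j \<le> s0" for j using sj_le[of s0 j] s0 by simp
  have Xr: "(1::real) \<le> real X" "real X \<le> real n" using X by auto
  have termnn: "0 \<le> exp (- sj s0 j * real X) - exp (- sj s0 j * real n)" for j
    using Xr spos[of j] by (simp add: mult_left_mono)
  have Gnn: "0 \<le> G s0 J n (real X)" unfolding G_def
    by (intro sum_nonneg mult_nonneg_nonneg) (use spos termnn in \<open>auto intro: less_imp_le\<close>)
  have e2: "exp (2::real) \<ge> 1" by simp
  have dle: "\<delta> \<le> e / 4"
  proof -
    have "s0\<^sup>2 \<le> 1" using s0 by (simp add: power_le_one)
    hence "e * s0\<^sup>2 \<le> e * 1" using e by (intro mult_left_mono) auto
    also have "e * 1 \<le> e * (4 * exp 2)" by (rule mult_left_mono) (use e e2 in linarith)+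
    also have "e * (4 * exp 2) = e / 4 * (16 * exp 2)" by simp
    finally show ?thesis unfolding \<delta>_def using e2 by (simp add: divide_le_eq)
  qed
  have d0: "0 \<le> \<delta>" unfolding \<delta>_def using e by simp
  have main: "(\<Sum>j\<le>J. sj s0 j * (exp (- sj s0 j * real X - e * sj s0 j / 4 * (\<phi> * real (min X (n - X)))) - exp (- sj s0 j * real n)))
       \<le> (1 - \<delta> * \<phi>) * G s0 J n (real X)"
  proof (cases "n - X \<le> X")
    case True
    hence mn: "min X (n - X) = n - X" by simp
    have "(\<Sum>j\<le>J. sj s0 j * (exp (- sj s0 j * real X - e * sj s0 j / 4 * (\<phi> * real (min X (n - X)))) - exp (- sj s0 j * real n)))
        \<le> (\<Sum>j\<le>J. (1 - \<delta> * \<phi>) * (sj s0 j * (exp (- sj s0 j * real X) - exp (- sj s0 j * real n))))"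
    proof (rule sum_mono)
      fix j
      have Y: "real (n - X) = real n - real X" using X by simp
      have p2: "exp (- sj s0 j * (real n - real (n - X)) - e * sj s0 j / 4 * (\<phi> * real (n - X))) - exp (- sj s0 j * real n)
          \<le> (1 - e * \<phi> / 4) * (exp (- sj s0 j * (real n - real (n - X))) - exp (- sj s0 j * real n))"
        by (rule phase2_term) (use spos[of j] ph e in auto)
      have nx: "real n - real (n - X) = real X" using Y by simp
      have "(1 - e * \<phi> / 4) * (exp (- sj s0 j * real X) - exp (- sj s0 j * real n))
          \<le> (1 - \<delta> * \<phi>) * (exp (- sj s0 j * real X) - exp (- sj s0 j * real n))"
      proof (rule mult_right_mono)
        have "\<delta> * \<phi> \<le> e / 4 * \<phi>" by (rule mult_right_mono[OF dle ph(1)])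
        thus "1 - e * \<phi> / 4 \<le> 1 - \<delta> * \<phi>" by simp
      qed (rule termnn)
      hence "exp (- sj s0 j * real X - e * sj s0 j / 4 * (\<phi> * real (min X (n - X)))) - exp (- sj s0 j * real n)
          \<le> (1 - \<delta> * \<phi>) * (exp (- sj s0 j * real X) - exp (- sj s0 j * real n))"
        using p2 unfolding nx mn by linarith
      hence "sj s0 j * (exp (- sj s0 j * real X - e * sj s0 j / 4 * (\<phi> * real (min X (n - X)))) - exp (- sj s0 j * real n))
          \<le> sj s0 j * ((1 - \<delta> * \<phi>) * (exp (- sj s0 j * real X) - exp (- sj s0 j * real n)))"
        using spos[of j] by (intro mult_left_mono) auto
      thus "sj s0 j * (exp (- sj s0 j * real X - e * sj s0 j / 4 * (\<phi> * real (min X (n - X)))) - exp (- sj s0 j * real n))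
          \<le> (1 - \<delta> * \<phi>) * (sj s0 j * (exp (- sj s0 j * real X) - exp (- sj s0 j * real n)))"
        by (simp add: algebra_simps)
    qed
    also have "\<dots> = (1 - \<delta> * \<phi>) * G s0 J n (real X)" unfolding G_def by (simp add: sum_distrib_left)
    finally show ?thesis .
  next
    case False
    hence mn: "min X (n - X) = X" by simp
    define D where "D = (\<Sum>j\<le>J. sj s0 j * exp (- sj s0 j * real X) * (1 - exp (- (e * sj s0 j / 4) * (\<phi> * real X))))"
    have LHS: "(\<Sum>j\<le>J. sj s0 j * (exp (- sj s0 j * real X - e * sj s0 j / 4 * (\<phi> * real (min X (n - X)))) - exp (- sj s0 j * real n)))
        = G s0 J n (real X) - D"
      unfolding mn term_id G_def D_def by (rule sum_subtractf)
    have Dnn: "0 \<le> sj s0 j * exp (- sj s0 j * real X) * (1 - exp (- (e * sj s0 j / 4) * (\<phi> * real X)))" for j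
    proof -
      have "0 \<le> (e * sj s0 j / 4) * (\<phi> * real X)" using e spos[of j] ph Xr by simp
      hence "exp (- (e * sj s0 j / 4) * (\<phi> * real X)) \<le> 1" by simp
      thus ?thesis using spos[of j] by (intro mult_nonneg_nonneg) auto
    qed
    have Gle: "G s0 J n (real X) \<le> 2 / real X"
    proof -
      have "G s0 J n (real X) \<le> (\<Sum>j\<le>J. sj s0 j * exp (- sj s0 j * real X))"
        unfolding G_def by (intro sum_mono) (use spos in \<open>auto intro!: mult_left_mono less_imp_le\<close>)
      also have "\<dots> \<le> 2 / real X" by (rule tele2) (use Xr s0 in auto)
      finally show ?thesis .
    qed
    have Dlb: "exp (- 2) * e * s0\<^sup>2 * \<phi> / (8 * real X) \<le> D"
    proof (cases "s0 * real X < 2")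
      case True
      have "exp (- 2) * e * s0\<^sup>2 * \<phi> / (8 * real X) \<le> exp (- 2) * e * s0\<^sup>2 * \<phi> * real X / 8"
      proof -
        have "1 / real X \<le> 1" using Xr by simp
        hence "1 / real X \<le> real X" using Xr by linarith
        moreover have "0 \<le> exp (- 2) * e * s0\<^sup>2 * \<phi> / 8" using e ph by simp
        ultimately have "(exp (- 2) * e * s0\<^sup>2 * \<phi> / 8) * (1 / real X) \<le> (exp (- 2) * e * s0\<^sup>2 * \<phi> / 8) * real X"
          by (intro mult_left_mono) auto
        thus ?thesis by simp
      qed
      also have "\<dots> \<le> sj s0 0 * exp (- sj s0 0 * real X) * (1 - exp (- (e * sj s0 0 / 4) * (\<phi> * real X)))"
        using term_lb[of s0 e \<phi> "real X"] s0 e ph Xr True by (simp add: sj_def)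
      also have "\<dots> \<le> D" unfolding D_def
        by (rule member_le_sum[where i=0]) (use Dnn in auto)
      finally show ?thesis .
    next
      case False
      hence "1 \<le> s0 * real X" by simp
      then obtain k where k: "2 ^ k \<le> s0 * real X" "s0 * real X < 2 ^ Suc k" using pow_interval by blast
      have sk: "sj s0 k = s0 / 2 ^ k" unfolding sj_def ..
      have skX1: "1 \<le> sj s0 k * real X" using k(1) unfolding sk by (simp add: field_simps)
      have skX2: "sj s0 k * real X \<le> 2" using k(2) unfolding sk by (simp add: field_simps)
      have kJ: "k \<le> J"
      proof -
        have "s0 * real X \<le> real X" using s0 Xr by (simp add: mult_left_le_one_le)
        moreover have "real n < real ((2::nat) ^ J)" using J by (simp only: of_nat_less_iff)
        moreover have "real ((2::nat) ^ J) = (2::real) ^ J" by simp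
        ultimately have "(2::real) ^ k < 2 ^ J" using k(1) Xr by linarith
        thus ?thesis by (simp add: power_strict_increasing_iff)
      qed
      have "exp (- 2) * e * s0\<^sup>2 * \<phi> / (8 * real X) \<le> exp (- 2) * e * (sj s0 k)\<^sup>2 * \<phi> * real X / 8"
      proof -
        have "1 \<le> (sj s0 k * real X)\<^sup>2" using skX1 by (simp add: one_le_power)
        hence "1 / real X \<le> (sj s0 k * real X)\<^sup>2 / real X" using Xr by (intro divide_right_mono) auto
        also have "(sj s0 k * real X)\<^sup>2 / real X = (sj s0 k)\<^sup>2 * real X" using Xr by (simp add: power2_eq_square)
        finally have "1 / real X \<le> (sj s0 k)\<^sup>2 * real X" .
        moreover have "s0\<^sup>2 \<le> 1" using s0 by (simp add: power_le_one)
        ultimately have "s0\<^sup>2 * (1 / real X) \<le> 1 * ((sj s0 k)\<^sup>2 * real X)"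
          using Xr by (intro mult_mono) auto
        moreover have "0 \<le> exp (- 2) * e * \<phi> / 8" using e ph by simp
        ultimately have "(exp (- 2) * e * \<phi> / 8) * (s0\<^sup>2 * (1 / real X)) \<le> (exp (- 2) * e * \<phi> / 8) * (1 * ((sj s0 k)\<^sup>2 * real X))"
          by (intro mult_left_mono) auto
        thus ?thesis by (simp add: algebra_simps)
      qed
      also have "\<dots> \<le> sj s0 k * exp (- sj s0 k * real X) * (1 - exp (- (e * sj s0 k / 4) * (\<phi> * real X)))"
        using term_lb[of "sj s0 k" e \<phi> "real X"] spos[of k] e ph Xr skX2 by simp
      also have "\<dots> \<le> D" unfolding D_def
        by (rule member_le_sum[where i=k]) (use Dnn kJ in auto)
      finally show ?thesis .
    qed
    have "\<delta> * \<phi> * G s0 J n (real X) \<le> \<delta> * \<phi> * (2 / real X)"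
      using Gle d0 ph by (intro mult_left_mono) auto
    also have "\<delta> * \<phi> * (2 / real X) = exp (- 2) * e * s0\<^sup>2 * \<phi> / (8 * real X)"
      unfolding \<delta>_def by (simp add: exp_minus field_simps)
    finally have "\<delta> * \<phi> * G s0 J n (real X) \<le> D" using Dlb by linarith
    thus ?thesis unfolding LHS by (simp add: algebra_simps)
  qed
  thus ?thesis unfolding s0_def \<delta>_def .
qed




lemma node_support:
  assumes "finite {u. E v u}" "{u. E v u} \<noteq> {}" "a \<in> set_pmf (node_step \<alpha> E x v)"
  shows "a = x v \<or> (\<exists>u. E v u \<and> a = x u)"
  using assms unfolding node_step_def by (auto simp: set_pmf_of_set split: if_splits)

lemma round_support:
  assumes reg: "regular_graph n d E" and n2: "n \<ge> 2"
    and y: "y \<in> set_pmf (round_step n \<alpha> E x)" and v: "v \<in> {1..n}"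
  shows "y v = x v \<or> (\<exists>u. E v u \<and> y v = x u)"
proof -
  have "y \<in> PiE_dflt {1..n} 0 (set_pmf \<circ> node_step \<alpha> E x)"
    using y unfolding round_step_def by (simp add: set_Pi_pmf)
  hence "y v \<in> set_pmf (node_step \<alpha> E x v)" using v unfolding PiE_dflt_def by auto
  moreover have "finite {u. E v u}" by (rule nbr_finite[OF reg])
  moreover have "{u. E v u} \<noteq> {}"
  proof -
    have "card {u. E v u} = d" using reg_deg[OF reg v] .
    moreover have "d > 0" using d_pos reg n2 by blast
    ultimately show ?thesis using card_gt_0_iff by force
  qed
  ultimately show ?thesis using node_support by blast
qed

lemma round_inv:
  assumes reg: "regular_graph n d E" and n2: "n \<ge> 2" and xk: "\<forall>v\<in>{1..n}. x v < \<kappa>"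
    and y: "y \<in> set_pmf (round_step n \<alpha> E x)"
  shows "\<forall>v\<in>{1..n}. y v < \<kappa>"
proof
  fix v assume v: "v \<in> {1..n}"
  from round_support[OF reg n2 y v] show "y v < \<kappa>"
  proof
    assume "y v = x v" thus ?thesis using xk v by simp
  next
    assume "\<exists>u. E v u \<and> y v = x u"
    then obtain u where "E v u" "y v = x u" by blast
    moreover have "u \<in> {1..n}" using reg_edge[OF reg \<open>E v u\<close>] by blast
    ultimately show ?thesis using xk by simp
  qed
qed

lemma round_nonzero:
  assumes reg: "regular_graph n d E" and n2: "n \<ge> 2" and x0: "card (Zs n x) = 0"
    and y: "y \<in> set_pmf (round_step n \<alpha> E x)"
  shows "card (Zs n y) = 0"
proof -
  have fin: "finite (Zs n z)" for z unfolding Zs_def by simp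
  have "Zs n x = {}" using x0 fin by simp
  hence xnz: "\<forall>v\<in>{1..n}. x v \<noteq> 0" unfolding Zs_def by auto
  have "\<forall>v\<in>{1..n}. y v \<noteq> 0"
  proof
    fix v assume v: "v \<in> {1..n}"
    from round_support[OF reg n2 y v] show "y v \<noteq> 0"
    proof
      assume "y v = x v" thus ?thesis using xnz v by simp
    next
      assume "\<exists>u. E v u \<and> y v = x u"
      then obtain u where "E v u" "y v = x u" by blast
      moreover have "u \<in> {1..n}" using reg_edge[OF reg \<open>E v u\<close>] by blast
      ultimately show ?thesis using xnz by simp
    qed
  qed
  hence "Zs n y = {}" unfolding Zs_def by auto
  thus ?thesis by simp
qed

lemma card_Zs_le: "card (Zs n y) \<le> n"
proof -
  have "card (Zs n y) \<le> card {1..n}" unfolding Zs_def by (rule card_mono) auto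
  thus ?thesis by simp
qed




lemma G_nonneg: assumes "0 \<le> s0" "0 \<le> X" "X \<le> real n" shows "0 \<le> G s0 J n X"
  unfolding G_def
proof (intro sum_nonneg mult_nonneg_nonneg)
  fix j
  show "0 \<le> sj s0 j" using assms unfolding sj_def by simp
  have "sj s0 j * X \<le> sj s0 j * real n" using assms by (intro mult_left_mono) (auto simp: sj_def)
  thus "0 \<le> exp (- sj s0 j * X) - exp (- sj s0 j * real n)" by simp
qed

lemma integrable_expZ: "0 \<le> s \<Longrightarrow> integrable (measure_pmf p) (\<lambda>y. exp (- s * real (card (Zs n y))))"
  by (rule measure_pmf.integrable_const_bound[where B=1]) auto

lemma exp_G:
  assumes "0 \<le> s0"
  shows "measure_pmf.expectation p (\<lambda>y. G s0 J n (real (card (Zs n y))))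
     = (\<Sum>j\<le>J. sj s0 j * (measure_pmf.expectation p (\<lambda>y. exp (- sj s0 j * real (card (Zs n y)))) - exp (- sj s0 j * real n)))"
proof -
  have sj0: "0 \<le> sj s0 j" for j using assms unfolding sj_def by simp
  have "measure_pmf.expectation p (\<lambda>y. G s0 J n (real (card (Zs n y))))
     = (\<Sum>j\<le>J. measure_pmf.expectation p (\<lambda>y. sj s0 j * (exp (- sj s0 j * real (card (Zs n y))) - exp (- sj s0 j * real n))))"
    unfolding G_def
  proof (rule Bochner_Integration.integral_sum)
    fix j
    show "integrable (measure_pmf p) (\<lambda>y. sj s0 j * (exp (- sj s0 j * real (card (Zs n y))) - exp (- sj s0 j * real n)))"
      by (rule integrable_mult_right, rule Bochner_Integration.integrable_diff[OF integrable_expZ[OF sj0]]) simp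
  qed
  also have "\<dots> = (\<Sum>j\<le>J. sj s0 j * (measure_pmf.expectation p (\<lambda>y. exp (- sj s0 j * real (card (Zs n y)))) - exp (- sj s0 j * real n)))"
  proof (rule sum.cong[OF refl])
    fix j
    have "measure_pmf.expectation p (\<lambda>y. sj s0 j * (exp (- sj s0 j * real (card (Zs n y))) - exp (- sj s0 j * real n)))
      = sj s0 j * measure_pmf.expectation p (\<lambda>y. exp (- sj s0 j * real (card (Zs n y))) - exp (- sj s0 j * real n))"
      by (rule Bochner_Integration.integral_mult_right_zero)
    also have "measure_pmf.expectation p (\<lambda>y. exp (- sj s0 j * real (card (Zs n y))) - exp (- sj s0 j * real n))
      = measure_pmf.expectation p (\<lambda>y. exp (- sj s0 j * real (card (Zs n y)))) - measure_pmf.expectation p (\<lambda>y. exp (- sj s0 j * real n))"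
      by (rule Bochner_Integration.integral_diff[OF integrable_expZ[OF sj0]]) simp
    also have "measure_pmf.expectation p (\<lambda>y. exp (- sj s0 j * real n)) = exp (- sj s0 j * real n)" by simp
    finally show "measure_pmf.expectation p (\<lambda>y. sj s0 j * (exp (- sj s0 j * real (card (Zs n y))) - exp (- sj s0 j * real n)))
      = sj s0 j * (measure_pmf.expectation p (\<lambda>y. exp (- sj s0 j * real (card (Zs n y)))) - exp (- sj s0 j * real n))" .
  qed
  finally show ?thesis .
qed




definition dlt :: "real \<Rightarrow> real" where "dlt e = e * (e/4)\<^sup>2 / (16 * exp 2)"

definition Hf :: "real \<Rightarrow> nat \<Rightarrow> nat \<Rightarrow> (nat \<Rightarrow> nat) \<Rightarrow> real" where
  "Hf e J n y = (if 1 \<le> card (Zs n y) then G (e/4) J n (real (card (Zs n y))) else 0)"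

lemma round_G:
  fixes e \<phi> :: real
  assumes reg: "regular_graph n d E" and n2: "n \<ge> 2" and cond: "\<phi> \<le> conductance n d E"
    and xk: "\<forall>v\<in>{1..n}. x v < \<kappa>" and a0: "\<alpha> 0 = 1"
    and aa: "\<forall>i. 1 \<le> i \<and> i < \<kappa> \<longrightarrow> 0 \<le> \<alpha> i \<and> \<alpha> i \<le> 1 - e"
    and e: "0 < e" "e \<le> 1/2" and X1: "1 \<le> card (Zs n x)" and J: "n < 2 ^ J"
  shows "measure_pmf.expectation (round_step n \<alpha> E x) (\<lambda>y. G (e/4) J n (real (card (Zs n y))))
     \<le> (1 - dlt e * max \<phi> 0) * G (e/4) J n (real (card (Zs n x)))"
proof -
  let ?X = "card (Zs n x)"
  have s0: "0 \<le> e / 4" using e by simp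
  have ph1: "max \<phi> 0 \<le> 1" using cond cond_le1[OF reg n2] by simp
  have "measure_pmf.expectation (round_step n \<alpha> E x) (\<lambda>y. G (e/4) J n (real (card (Zs n y))))
     = (\<Sum>j\<le>J. sj (e/4) j * (measure_pmf.expectation (round_step n \<alpha> E x) (\<lambda>y. exp (- sj (e/4) j * real (card (Zs n y)))) - exp (- sj (e/4) j * real n)))"
    by (rule exp_G[OF s0])
  also have "\<dots> \<le> (\<Sum>j\<le>J. sj (e/4) j * (exp (- sj (e/4) j * real ?X - e * sj (e/4) j / 4 * (max \<phi> 0 * real (min ?X (n - ?X)))) - exp (- sj (e/4) j * real n)))"
  proof (rule sum_mono)
    fix j
    have sp: "0 < sj (e/4) j" using sj_pos[of "e/4" j] e by simp
    have sl: "sj (e/4) j \<le> e / 4" using sj_le[OF s0, of j] .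
    have "measure_pmf.expectation (round_step n \<alpha> E x) (\<lambda>y. exp (- sj (e/4) j * real (card (Zs n y))))
      \<le> exp (- sj (e/4) j * real ?X - e * sj (e/4) j / 4 * (max \<phi> 0 * real (min ?X (n - ?X))))"
      by (rule round_exp[OF reg n2 cond xk a0 aa e sp sl])
    thus "sj (e/4) j * (measure_pmf.expectation (round_step n \<alpha> E x) (\<lambda>y. exp (- sj (e/4) j * real (card (Zs n y)))) - exp (- sj (e/4) j * real n))
      \<le> sj (e/4) j * (exp (- sj (e/4) j * real ?X - e * sj (e/4) j / 4 * (max \<phi> 0 * real (min ?X (n - ?X)))) - exp (- sj (e/4) j * real n))"
      using sp by (intro mult_left_mono) auto
  qed
  also have "\<dots> \<le> (1 - (e * (e/4)\<^sup>2 / (16 * exp 2)) * max \<phi> 0) * G (e/4) J n (real ?X)"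
    by (rule G_step[OF e _ ph1 X1 card_Zs_le J]) simp
  finally show ?thesis unfolding dlt_def .
qed

lemma round_H:
  fixes e \<phi> :: real
  assumes reg: "regular_graph n d E" and n2: "n \<ge> 2" and cond: "\<phi> \<le> conductance n d E"
    and xk: "\<forall>v\<in>{1..n}. x v < \<kappa>" and a0: "\<alpha> 0 = 1"
    and aa: "\<forall>i. 1 \<le> i \<and> i < \<kappa> \<longrightarrow> 0 \<le> \<alpha> i \<and> \<alpha> i \<le> 1 - e"
    and e: "0 < e" "e \<le> 1/2" and J: "n < 2 ^ J"
  shows "measure_pmf.expectation (round_step n \<alpha> E x) (Hf e J n) \<le> exp (- (dlt e * max \<phi> 0)) * Hf e J n x"
proof (cases "1 \<le> card (Zs n x)")
  case False
  hence x0: "card (Zs n x) = 0" by simp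
  have "measure_pmf.expectation (round_step n \<alpha> E x) (Hf e J n) = measure_pmf.expectation (round_step n \<alpha> E x) (\<lambda>_. 0)"
    by (rule integral_cong_AE) (auto intro!: AE_pmfI simp: Hf_def round_nonzero[OF reg n2 x0])
  thus ?thesis using False by (simp add: Hf_def)
next
  case True
  have s0: "0 \<le> e / 4" using e by simp
  have Gn: "0 \<le> G (e/4) J n (real (card (Zs n y)))" for y
    by (rule G_nonneg[OF s0]) (use card_Zs_le in auto)
  have intG: "integrable (measure_pmf (round_step n \<alpha> E x)) (\<lambda>y. G (e/4) J n (real (card (Zs n y))))"
    unfolding G_def
    by (rule Bochner_Integration.integrable_sum, rule integrable_mult_right,
        rule Bochner_Integration.integrable_diff[OF integrable_expZ]) (use s0 in \<open>auto simp: sj_def\<close>)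
  have intH: "integrable (measure_pmf (round_step n \<alpha> E x)) (Hf e J n)"
  proof -
    have "integrable (measure_pmf (round_step n \<alpha> E x)) (\<lambda>y. indicator {y. 1 \<le> card (Zs n y)} y *\<^sub>R G (e/4) J n (real (card (Zs n y))))"
      by (rule integrable_mult_indicator) (auto intro: intG)
    moreover have "(\<lambda>y. indicator {y. 1 \<le> card (Zs n y)} y *\<^sub>R G (e/4) J n (real (card (Zs n y)))) = Hf e J n"
      by (auto simp: Hf_def fun_eq_iff indicator_def)
    ultimately show ?thesis by simp
  qed
  have "measure_pmf.expectation (round_step n \<alpha> E x) (Hf e J n) \<le> measure_pmf.expectation (round_step n \<alpha> E x) (\<lambda>y. G (e/4) J n (real (card (Zs n y))))"
    by (rule integral_mono[OF intH intG]) (use Gn in \<open>auto simp: Hf_def\<close>)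
  also have "\<dots> \<le> (1 - dlt e * max \<phi> 0) * G (e/4) J n (real (card (Zs n x)))"
    by (rule round_G[OF reg n2 cond xk a0 aa e True J])
  also have "\<dots> \<le> exp (- (dlt e * max \<phi> 0)) * G (e/4) J n (real (card (Zs n x)))"
  proof (rule mult_right_mono)
    show "1 - dlt e * max \<phi> 0 \<le> exp (- (dlt e * max \<phi> 0))"
      using exp_ge_add_one_self[of "- (dlt e * max \<phi> 0)"] by linarith
  qed (rule Gn)
  finally show ?thesis using True by (simp add: Hf_def)
qed

lemma round_Z:
  fixes e \<phi> :: real
  assumes reg: "regular_graph n d E" and n2: "n \<ge> 2" and cond: "\<phi> \<le> conductance n d E"
    and xk: "\<forall>v\<in>{1..n}. x v < \<kappa>" and a0: "\<alpha> 0 = 1"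
    and aa: "\<forall>i. 1 \<le> i \<and> i < \<kappa> \<longrightarrow> 0 \<le> \<alpha> i \<and> \<alpha> i \<le> 1 - e"
    and e: "0 < e" "e \<le> 1/2"
  shows "measure_pmf.expectation (round_step n \<alpha> E x) (\<lambda>y. exp (- (e/4) * real (card (Zs n y))))
     \<le> exp (- (e/4) * real (card (Zs n x)))"
proof -
  let ?X = "card (Zs n x)"
  have "measure_pmf.expectation (round_step n \<alpha> E x) (\<lambda>y. exp (- (e/4) * real (card (Zs n y))))
     \<le> exp (- (e/4) * real ?X - e * (e/4) / 4 * (max \<phi> 0 * real (min ?X (n - ?X))))"
    by (rule round_exp[OF reg n2 cond xk a0 aa e]) (use e in auto)
  also have "\<dots> \<le> exp (- (e/4) * real ?X)"
    using e by simp
  finally show ?thesis .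
qed




lemma run_inv:
  assumes inv: "\<forall>v\<in>{1..n}. x0 v < \<kappa>"
    and graphs: "\<forall>t \<ge> 1. \<forall>x. regular_graph n d (Adv t x)"
    and n2: "n \<ge> 2"
  shows "\<forall>y\<in>set_pmf (run n \<alpha> Adv x0 t). \<forall>v\<in>{1..n}. y v < \<kappa>"
proof (induction t)
  case 0 thus ?case using inv by simp
next
  case (Suc t)
  show ?case
  proof
    fix y assume "y \<in> set_pmf (run n \<alpha> Adv x0 (Suc t))"
    then obtain x where x: "x \<in> set_pmf (run n \<alpha> Adv x0 t)" "y \<in> set_pmf (round_step n \<alpha> (Adv (Suc t) x) x)"
      by auto
    have "regular_graph n d (Adv (Suc t) x)" using graphs by simp
    thus "\<forall>v\<in>{1..n}. y v < \<kappa>" using round_inv[OF _ n2 _ x(2)] Suc.IH x(1) by blast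
  qed
qed

lemma nn_exp:
  fixes f :: "'a \<Rightarrow> real"
  assumes "\<And>y. 0 \<le> f y" "\<And>y. f y \<le> B"
  shows "(\<integral>\<^sup>+y. ennreal (f y) \<partial>measure_pmf p) = ennreal (measure_pmf.expectation p f)"
proof (rule nn_integral_eq_integral)
  show "integrable (measure_pmf p) f"
    by (rule measure_pmf.integrable_const_bound[where B=B]) (use assms in auto)
qed (use assms in auto)

lemma run_bound:
  fixes f :: "(nat \<Rightarrow> nat) \<Rightarrow> real" and c :: "nat \<Rightarrow> real"
  assumes inv: "\<forall>v\<in>{1..n}. x0 v < \<kappa>"
    and graphs: "\<forall>t \<ge> 1. \<forall>x. regular_graph n d (Adv t x)"
    and n2: "n \<ge> 2"
    and fnn: "\<And>y. 0 \<le> f y" and fb: "\<And>y. f y \<le> B"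
    and step: "\<And>t x. \<forall>v\<in>{1..n}. x v < \<kappa> \<Longrightarrow>
        measure_pmf.expectation (round_step n \<alpha> (Adv (Suc t) x) x) f \<le> c (Suc t) * f x"
    and c0: "\<And>t. 0 \<le> c t"
  shows "(\<integral>\<^sup>+y. ennreal (f y) \<partial>measure_pmf (run n \<alpha> Adv x0 t)) \<le> ennreal ((\<Prod>i\<in>{1..t}. c i) * f x0)"
proof (induction t)
  case 0 thus ?case by (simp add: nn_integral_return)
next
  case (Suc t)
  have "(\<integral>\<^sup>+y. ennreal (f y) \<partial>measure_pmf (run n \<alpha> Adv x0 (Suc t)))
     = (\<integral>\<^sup>+x. (\<integral>\<^sup>+y. ennreal (f y) \<partial>measure_pmf (round_step n \<alpha> (Adv (Suc t) x) x)) \<partial>measure_pmf (run n \<alpha> Adv x0 t))"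
    by simp
  also have "\<dots> \<le> (\<integral>\<^sup>+x. ennreal (c (Suc t) * f x) \<partial>measure_pmf (run n \<alpha> Adv x0 t))"
  proof (rule nn_integral_mono_AE, rule AE_pmfI)
    fix x assume x: "x \<in> set_pmf (run n \<alpha> Adv x0 t)"
    have xi: "\<forall>v\<in>{1..n}. x v < \<kappa>" using run_inv[OF inv graphs n2] x by blast
    have "(\<integral>\<^sup>+y. ennreal (f y) \<partial>measure_pmf (round_step n \<alpha> (Adv (Suc t) x) x))
        = ennreal (measure_pmf.expectation (round_step n \<alpha> (Adv (Suc t) x) x) f)"
      by (rule nn_exp[OF fnn fb])
    also have "\<dots> \<le> ennreal (c (Suc t) * f x)" using step[OF xi] by (simp add: ennreal_leI)
    finally show "(\<integral>\<^sup>+y. ennreal (f y) \<partial>measure_pmf (round_step n \<alpha> (Adv (Suc t) x) x)) \<le> ennreal (c (Suc t) * f x)" .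
  qed
  also have "\<dots> = ennreal (c (Suc t)) * (\<integral>\<^sup>+x. ennreal (f x) \<partial>measure_pmf (run n \<alpha> Adv x0 t))"
    using c0 fnn by (simp add: ennreal_mult nn_integral_cmult)
  also have "\<dots> \<le> ennreal (c (Suc t)) * ennreal ((\<Prod>i\<in>{1..t}. c i) * f x0)"
    by (rule mult_left_mono[OF Suc.IH]) simp
  also have "\<dots> = ennreal ((\<Prod>i\<in>{1..Suc t}. c i) * f x0)"
    using c0 fnn by (simp add: ennreal_mult[symmetric] prod.nat_ivl_Suc' prod_nonneg algebra_simps)
  finally show ?case .
qed




definition Jn :: "nat \<Rightarrow> nat" where "Jn n = (LEAST k. n < 2 ^ k)"

lemma Jn_gt: "n < 2 ^ Jn n"
  unfolding Jn_def by (rule LeastI[of _ n]) simp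

lemma Jn_le: assumes "1 \<le> n" shows "2 ^ Jn n \<le> 2 * n"
proof (cases "Jn n")
  case 0 thus ?thesis using assms by simp
next
  case (Suc m)
  have "\<not> n < 2 ^ m" using not_less_Least[of m "\<lambda>k. n < 2 ^ k"] Suc unfolding Jn_def by simp
  thus ?thesis using Suc by simp
qed

lemma G_le1:
  assumes "0 \<le> s0" "s0 \<le> 1/2" "0 \<le> X"
  shows "G s0 J n X \<le> 1"
proof -
  have "G s0 J n X \<le> (\<Sum>j\<le>J. sj s0 j)" unfolding G_def
  proof (rule sum_mono)
    fix j
    have sj0: "0 \<le> sj s0 j" using assms unfolding sj_def by simp
    have "exp (- sj s0 j * X) \<le> 1" using sj0 assms by simp
    hence "exp (- sj s0 j * X) - exp (- sj s0 j * real n) \<le> 1" using exp_gt_zero[of "- sj s0 j * real n"] by linarith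
    thus "sj s0 j * (exp (- sj s0 j * X) - exp (- sj s0 j * real n)) \<le> sj s0 j"
      using sj0 mult_left_mono[of _ 1 "sj s0 j"] by fastforce
  qed
  also have "\<dots> = 2 * s0 - s0 / 2 ^ J" by (rule sum_sj)
  also have "\<dots> \<le> 1"
  proof -
    have "0 \<le> s0 / 2 ^ J" using assms by simp
    thus ?thesis using assms by linarith
  qed
  finally show ?thesis .
qed

lemma G_min:
  fixes X n :: nat and s0 :: real
  assumes s0: "0 < s0" "s0 \<le> 1" and X: "X + 1 \<le> n" and n1: "1 \<le> n"
  shows "s0\<^sup>2 / (4 * exp 1 * real n ^ 2) \<le> G s0 (Jn n) n (real X)"
proof -
  let ?J = "Jn n"
  let ?s = "sj s0 ?J"
  have sp: "0 < ?s" using sj_pos[OF s0(1)] .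
  have termnn: "0 \<le> sj s0 j * (exp (- sj s0 j * real X) - exp (- sj s0 j * real n))" for j
  proof -
    have sj0: "0 < sj s0 j" using sj_pos[OF s0(1)] .
    have "sj s0 j * real X \<le> sj s0 j * real n" using X sj0 by (intro mult_left_mono) auto
    thus ?thesis using sj0 by simp
  qed
  have n2J: "real n < 2 ^ ?J" using Jn_gt[of n] by (metis of_nat_less_iff of_nat_numeral of_nat_power)
  have J2n: "(2::real) ^ ?J \<le> 2 * real n" using Jn_le[OF n1] by (metis of_nat_le_iff of_nat_mult of_nat_numeral of_nat_power)
  have nr: "0 < real n" using n1 by simp
  have sn1: "?s * real n \<le> 1"
  proof -
    have "?s * real n = s0 * real n / 2 ^ ?J" unfolding sj_def by simp
    also have "\<dots> \<le> s0" using n2J s0 by (simp add: divide_le_eq mult_left_mono)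
    finally show ?thesis using s0 by simp
  qed
  have slow: "s0 / (2 * real n) \<le> ?s" unfolding sj_def
    using J2n s0 nr by (intro divide_left_mono) auto
  have "G s0 ?J n (real X) \<ge> ?s * (exp (- ?s * real X) - exp (- ?s * real n))"
    unfolding G_def by (rule member_le_sum[where i="?J"]) (use termnn in auto)
  moreover have "exp (- ?s * real X) - exp (- ?s * real n) \<ge> exp (- 1) * ?s"
  proof -
    have "exp (- ?s * real X) \<ge> exp (- ?s * (real n - 1))"
      using X sp by (simp add: mult_left_mono)
    moreover have "exp (- ?s * (real n - 1)) - exp (- ?s * real n) = exp (- ?s * real n) * (exp ?s - 1)"
      by (simp add: algebra_simps flip: exp_add)
    moreover have "exp (- ?s * real n) \<ge> exp (- 1)" using sn1 by simp
    moreover have "exp ?s - 1 \<ge> ?s" using exp_ge_add_one_self[of ?s] by linarith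
    ultimately show ?thesis using sp
      by (smt (verit, best) exp_gt_zero mult_mono)
  qed
  ultimately have "G s0 ?J n (real X) \<ge> ?s * (exp (- 1) * ?s)"
    using sp by (smt (verit) mult_left_mono)
  moreover have "?s * (exp (- 1) * ?s) \<ge> s0\<^sup>2 / (4 * exp 1 * real n ^ 2)"
  proof -
    have "(s0 / (2 * real n)) * (s0 / (2 * real n)) \<le> ?s * ?s"
      using slow s0 nr sp by (intro mult_mono) auto
    hence "exp (- 1) * ((s0 / (2 * real n)) * (s0 / (2 * real n))) \<le> exp (- 1) * (?s * ?s)"
      by (intro mult_left_mono) auto
    moreover have "exp (- 1) * ((s0 / (2 * real n)) * (s0 / (2 * real n))) = s0\<^sup>2 / (4 * exp 1 * real n ^ 2)"
      by (simp add: exp_minus power2_eq_square field_simps)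
    ultimately show ?thesis by (simp add: algebra_simps)
  qed
  ultimately show ?thesis by linarith
qed

lemma markov_pmf:
  fixes f :: "'a \<Rightarrow> real"
  assumes "\<And>y. indicator A y \<le> f y" "\<And>y. f y \<le> B"
  shows "measure_pmf.prob p A \<le> measure_pmf.expectation p f"
proof -
  have "measure_pmf.prob p A = measure_pmf.expectation p (indicator A)" by simp
  also have "\<dots> \<le> measure_pmf.expectation p f"
  proof (rule integral_mono)
    show "integrable (measure_pmf p) f"
    proof (rule measure_pmf.integrable_const_bound[where B=B])
      have "norm (f y) \<le> B" for y
      proof -
        have "(0::real) \<le> indicator A y" by simp
        hence "0 \<le> f y" using assms(1)[of y] by linarith
        thus ?thesis using assms(2)[of y] by simp
      qed
      thus "AE x in measure_pmf p. norm (f x) \<le> B" by simp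
    qed simp
  next
    show "integrable (measure_pmf p) (indicator A :: 'a \<Rightarrow> real)"
      by (rule measure_pmf.integrable_const_bound[where B=1]) (auto simp: indicator_def)
  qed (use assms in auto)
  finally show ?thesis .
qed




theorem theorem3:
  fixes \<epsilon> :: real
  assumes "0 < \<epsilon>"
  shows "\<exists>b > 0. \<exists>c > 0. \<exists>n0::nat. \<forall>n \<ge> n0. \<forall>(d::nat) (\<kappa>::nat) (\<alpha>::nat \<Rightarrow> real)
           (\<phi>::nat \<Rightarrow> real) Adv (x0::nat \<Rightarrow> nat).
     \<kappa> \<le> n \<longrightarrow>
     \<alpha> 0 = 1 \<longrightarrow>
     (\<forall>i. 1 \<le> i \<and> i < \<kappa> \<longrightarrow> 0 \<le> \<alpha> i \<and> \<alpha> i \<le> 1 - \<epsilon>) \<longrightarrow>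
     (\<forall>i j. 1 \<le> i \<and> i \<le> j \<and> j < \<kappa> \<longrightarrow> \<alpha> j \<le> \<alpha> i) \<longrightarrow>
     (\<forall>t \<ge> 1. \<forall>x. regular_graph n d (Adv t x) \<and> conductance n d (Adv t x) \<ge> \<phi> t) \<longrightarrow>
     (\<forall>v\<in>{1..n}. x0 v < \<kappa>) \<longrightarrow>
     real (card {v\<in>{1..n}. x0 v = 0}) \<ge> c * ln (real n) \<longrightarrow>
     (\<exists>\<tau>. (\<Sum>t=1..\<tau>. \<phi> t) \<ge> b * ln (real n)) \<longrightarrow>
     measure_pmf.prob
        (run n \<alpha> Adv x0 (LEAST \<tau>. (\<Sum>t=1..\<tau>. \<phi> t) \<ge> b * ln (real n)))
        {x. \<forall>v\<in>{1..n}. x v = 0}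
       \<ge> 1 - 1 / real n"
proof -
  define e where "e = min \<epsilon> (1/2)"
  define s0 where "s0 = e / 4"
  define \<delta> where "\<delta> = dlt e"
  have e: "0 < e" "e \<le> 1/2" using assms unfolding e_def by auto
  have s0: "0 < s0" "s0 \<le> 1/8" using e unfolding s0_def by auto
  have d0: "0 < \<delta>" unfolding \<delta>_def dlt_def using e by simp
  define b where "b = 5 / \<delta>"
  define c where "c = 2 / s0"
  define n0 where "n0 = nat \<lceil>24 / s0\<^sup>2\<rceil> + 2"
  have bpos: "b > 0" unfolding b_def using d0 by simp
  have cpos: "c > 0" unfolding c_def using s0 by simp
  have main: "measure_pmf.prob
        (run n \<alpha> Adv x0 (LEAST \<tau>. (\<Sum>t=1..\<tau>. \<phi> t) \<ge> b * ln (real n)))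
        {x. \<forall>v\<in>{1..n}. x v = 0} \<ge> 1 - 1 / real n"
    if hn: "n \<ge> n0" and a0: "\<alpha> 0 = 1"
      and aeps: "\<forall>i. 1 \<le> i \<and> i < \<kappa> \<longrightarrow> 0 \<le> \<alpha> i \<and> \<alpha> i \<le> 1 - \<epsilon>"
      and graphs: "\<forall>t \<ge> 1. \<forall>x. regular_graph n d (Adv t x) \<and> conductance n d (Adv t x) \<ge> \<phi> t"
      and xk: "\<forall>v\<in>{1..n}. x0 v < \<kappa>"
      and hc: "real (card {v\<in>{1..n}. x0 v = 0}) \<ge> c * ln (real n)"
      and hex: "\<exists>\<tau>. (\<Sum>t=1..\<tau>. \<phi> t) \<ge> b * ln (real n)"
    for n d \<kappa> \<alpha> \<phi> Adv x0
  proof -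
    have n2: "n \<ge> 2" using hn unfolding n0_def by simp
    have nr: "real n \<ge> 2" using n2 by simp
    have aa: "\<forall>i. 1 \<le> i \<and> i < \<kappa> \<longrightarrow> 0 \<le> \<alpha> i \<and> \<alpha> i \<le> 1 - e"
      using aeps unfolding e_def by force
    have reg: "\<forall>t \<ge> 1. \<forall>x. regular_graph n d (Adv t x)" using graphs by blast
    define \<tau> where "\<tau> = (LEAST \<tau>. (\<Sum>t=1..\<tau>. \<phi> t) \<ge> b * ln (real n))"
    have h\<tau>: "(\<Sum>t=1..\<tau>. \<phi> t) \<ge> b * ln (real n)" unfolding \<tau>_def by (rule LeastI_ex[OF hex])
    define p where "p = run n \<alpha> Adv x0 \<tau>"
    define J where "J = Jn n"
    define Z where "Z y = exp (- (e/4) * real (card (Zs n y)))" for y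
    define H where "H = Hf e J n"
    have Jn: "n < 2 ^ J" unfolding J_def by (rule Jn_gt)
    have Z01: "0 \<le> Z y" "Z y \<le> 1" for y unfolding Z_def using e by auto
    have H0: "0 \<le> H y" for y
      unfolding H_def Hf_def using G_nonneg[of "e/4" "real (card (Zs n y))" n J] e card_Zs_le[of n y] by auto
    have H1: "H y \<le> 1" for y
      unfolding H_def Hf_def using G_le1[of "e/4" "real (card (Zs n y))" J n] e by auto
    have EZ: "measure_pmf.expectation p Z \<le> Z x0"
    proof -
      have "(\<integral>\<^sup>+y. ennreal (Z y) \<partial>measure_pmf p) \<le> ennreal ((\<Prod>i\<in>{1..\<tau>}. (\<lambda>_. 1::real) i) * Z x0)"
        unfolding p_def
      proof (rule run_bound[OF xk reg n2, where B=1])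
        fix t x assume xi: "\<forall>v\<in>{1..n}. x v < \<kappa>"
        have "regular_graph n d (Adv (Suc t) x)" "\<phi> (Suc t) \<le> conductance n d (Adv (Suc t) x)"
          using graphs by auto
        thus "measure_pmf.expectation (round_step n \<alpha> (Adv (Suc t) x) x) Z \<le> 1 * Z x"
          unfolding Z_def using round_Z[OF _ n2 _ xi a0 aa e] by simp
      qed (use Z01 in auto)
      also have "\<dots> = ennreal (Z x0)" by simp
      finally have "ennreal (measure_pmf.expectation p Z) \<le> ennreal (Z x0)"
        using nn_exp[of Z 1 p] Z01 by simp
      thus ?thesis using Z01 by (simp add: ennreal_le_iff)
    qed
    have EH: "measure_pmf.expectation p H \<le> (\<Prod>i\<in>{1..\<tau>}. exp (- (\<delta> * max (\<phi> i) 0))) * H x0"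
    proof -
      have "(\<integral>\<^sup>+y. ennreal (H y) \<partial>measure_pmf p) \<le> ennreal ((\<Prod>i\<in>{1..\<tau>}. exp (- (\<delta> * max (\<phi> i) 0))) * H x0)"
        unfolding p_def
      proof (rule run_bound[OF xk reg n2, where B=1])
        fix t x assume xi: "\<forall>v\<in>{1..n}. x v < \<kappa>"
        have "regular_graph n d (Adv (Suc t) x)" "\<phi> (Suc t) \<le> conductance n d (Adv (Suc t) x)"
          using graphs by auto
        thus "measure_pmf.expectation (round_step n \<alpha> (Adv (Suc t) x) x) H \<le> exp (- (\<delta> * max (\<phi> (Suc t)) 0)) * H x"
          unfolding H_def \<delta>_def using round_H[OF _ n2 _ xi a0 aa e Jn] by simp
      qed (use H0 H1 in auto)
      moreover have "(\<integral>\<^sup>+y. ennreal (H y) \<partial>measure_pmf p) = ennreal (measure_pmf.expectation p H)"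
        using nn_exp[of H 1 p] H0 H1 by simp
      ultimately have "ennreal (measure_pmf.expectation p H) \<le> ennreal ((\<Prod>i\<in>{1..\<tau>}. exp (- (\<delta> * max (\<phi> i) 0))) * H x0)"
        by simp
      moreover have "0 \<le> (\<Prod>i\<in>{1..\<tau>}. exp (- (\<delta> * max (\<phi> i) 0))) * H x0"
        using H0 by (simp add: prod_nonneg)
      ultimately show ?thesis by (simp add: ennreal_le_iff)
    qed
    have prodb: "(\<Prod>i\<in>{1..\<tau>}. exp (- (\<delta> * max (\<phi> i) 0))) \<le> 1 / real n ^ 5"
    proof -
      have "(\<Prod>i\<in>{1..\<tau>}. exp (- (\<delta> * max (\<phi> i) 0))) = exp (- (\<delta> * (\<Sum>i\<in>{1..\<tau>}. max (\<phi> i) 0)))"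
      proof -
        have "exp (- (\<delta> * (\<Sum>i\<in>{1..\<tau>}. max (\<phi> i) 0))) = exp (\<Sum>i\<in>{1..\<tau>}. - (\<delta> * max (\<phi> i) 0))"
          by (simp add: sum_distrib_left sum_negf)
        also have "\<dots> = (\<Prod>i\<in>{1..\<tau>}. exp (- (\<delta> * max (\<phi> i) 0)))" by (rule exp_sum) simp
        finally show ?thesis by simp
      qed
      also have "\<dots> \<le> exp (- (\<delta> * (b * ln (real n))))"
      proof -
        have "(\<Sum>i\<in>{1..\<tau>}. \<phi> i) \<le> (\<Sum>i\<in>{1..\<tau>}. max (\<phi> i) 0)" by (intro sum_mono) simp
        hence "b * ln (real n) \<le> (\<Sum>i\<in>{1..\<tau>}. max (\<phi> i) 0)" using h\<tau> by linarith
        thus ?thesis using d0 by simp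
      qed
      also have "\<delta> * (b * ln (real n)) = 5 * ln (real n)" unfolding b_def using d0 by simp
      also have "exp (- (5 * ln (real n))) = 1 / real n ^ 5"
      proof -
        have "ln (real n ^ 5) = 5 * ln (real n)" using nr by (simp add: ln_realpow)
        hence "exp (5 * ln (real n)) = exp (ln (real n ^ 5))" by simp
        also have "\<dots> = real n ^ 5" using nr by simp
        finally show ?thesis by (simp add: exp_minus inverse_eq_divide)
      qed
      finally show ?thesis .
    qed
    have Zx0: "Z x0 \<le> 1 / real n ^ 2"
    proof -
      have eqz: "Zs n x0 = {v\<in>{1..n}. x0 v = 0}" unfolding Zs_def ..
      have "(e/4) * (c * ln (real n)) \<le> (e/4) * real (card (Zs n x0))"
        using hc e unfolding eqz by (intro mult_left_mono) auto
      moreover have "(e/4) * (c * ln (real n)) = 2 * ln (real n)" unfolding c_def s0_def using e by simp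
      ultimately have key: "2 * ln (real n) \<le> (e/4) * real (card (Zs n x0))" by linarith
      have "Z x0 \<le> exp (- (2 * ln (real n)))" unfolding Z_def using key by simp
      also have "exp (- (2 * ln (real n))) = 1 / real n ^ 2"
      proof -
        have "ln (real n ^ 2) = 2 * ln (real n)" using nr by (simp add: ln_realpow)
        hence "exp (2 * ln (real n)) = exp (ln (real n ^ 2))" by simp
        also have "\<dots> = real n ^ 2" using nr by simp
        finally show ?thesis by (simp add: exp_minus inverse_eq_divide)
      qed
      finally show ?thesis .
    qed
    define gm where "gm = s0\<^sup>2 / (4 * exp 1 * real n ^ 2)"
    have gm0: "0 < gm" unfolding gm_def using s0 nr by simp
    define A where "A = {x::nat\<Rightarrow>nat. \<forall>v\<in>{1..n}. x v = 0}"
    define B1 where "B1 = {y::nat\<Rightarrow>nat. card (Zs n y) = 0}"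
    define B2 where "B2 = {y::nat\<Rightarrow>nat. 1 \<le> card (Zs n y) \<and> card (Zs n y) < n}"
    have cover: "UNIV - A \<subseteq> B1 \<union> B2"
    proof
      fix y assume "y \<in> UNIV - A"
      then obtain v where v: "v \<in> {1..n}" "y v \<noteq> 0" unfolding A_def by auto
      have sub: "Zs n y \<subseteq> {1..n}" unfolding Zs_def by auto
      have "v \<notin> Zs n y" using v unfolding Zs_def by simp
      hence "Zs n y \<noteq> {1..n}" using v(1) by blast
      hence "Zs n y \<subset> {1..n}" using sub by blast
      hence "card (Zs n y) < card {1..n}" by (rule psubset_card_mono[rotated]) simp
      thus "y \<in> B1 \<union> B2" unfolding B1_def B2_def by auto
    qed
    have mB1: "measure_pmf.prob p B1 \<le> 1 / real n ^ 2"
    proof -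
      have "measure_pmf.prob p B1 \<le> measure_pmf.expectation p Z"
      proof (rule markov_pmf[where B=1])
        fix y
        show "indicator B1 y \<le> Z y" using Z01[of y] unfolding B1_def Z_def by (auto simp: indicator_def)
        show "Z y \<le> 1" by (rule Z01)
      qed
      thus ?thesis using EZ Zx0 by linarith
    qed
    have mB2: "measure_pmf.prob p B2 \<le> (1 / real n ^ 5) / gm"
    proof -
      have "measure_pmf.prob p B2 \<le> measure_pmf.expectation p (\<lambda>y. H y / gm)"
      proof (rule markov_pmf[where B="1/gm"])
        fix y
        show "indicator B2 y \<le> H y / gm"
        proof (cases "y \<in> B2")
          case True
          hence X: "1 \<le> card (Zs n y)" "card (Zs n y) + 1 \<le> n" unfolding B2_def by auto
          have "gm \<le> G (e/4) J n (real (card (Zs n y)))"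
            unfolding gm_def J_def s0_def by (rule G_min) (use e X n2 in auto)
          hence "gm \<le> H y" unfolding H_def Hf_def using X by simp
          thus ?thesis using True gm0 by simp
        next
          case False
          thus ?thesis using H0[of y] gm0 by simp
        qed
        show "H y / gm \<le> 1 / gm" using H1[of y] gm0 by (simp add: divide_right_mono)
      qed
      also have "measure_pmf.expectation p (\<lambda>y. H y / gm) = measure_pmf.expectation p H / gm"
        by (rule Bochner_Integration.integral_divide_zero)
      also have "\<dots> \<le> ((\<Prod>i\<in>{1..\<tau>}. exp (- (\<delta> * max (\<phi> i) 0))) * H x0) / gm"
        using EH gm0 by (simp add: divide_right_mono)
      also have "\<dots> \<le> (1 / real n ^ 5) / gm"
      proof -
        have "(\<Prod>i\<in>{1..\<tau>}. exp (- (\<delta> * max (\<phi> i) 0))) * H x0 \<le> (1 / real n ^ 5) * 1"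
          using prodb H0[of x0] H1[of x0] by (intro mult_mono) (auto simp: prod_nonneg)
        hence "(\<Prod>i\<in>{1..\<tau>}. exp (- (\<delta> * max (\<phi> i) 0))) * H x0 \<le> 1 / real n ^ 5" by simp
        thus ?thesis using gm0 by (rule divide_right_mono[OF _ less_imp_le])
      qed
      finally show ?thesis .
    qed
    have arith: "1 / real n ^ 2 + (1 / real n ^ 5) / gm \<le> 1 / real n"
    proof -
      have q: "(1 / real n ^ 5) / gm = 4 * exp 1 / (s0\<^sup>2 * real n ^ 3)"
        unfolding gm_def using nr s0 by (simp add: field_simps power_def)
      have big: "24 \<le> s0\<^sup>2 * real n"
      proof -
        have "24 / s0\<^sup>2 \<le> real n" using hn unfolding n0_def by linarith
        thus ?thesis using s0 by (simp add: divide_le_eq mult.commute)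
      qed
      have "8 * exp 1 \<le> s0\<^sup>2 * real n ^ 2"
      proof -
        have "s0\<^sup>2 * real n * 1 \<le> s0\<^sup>2 * real n * real n" using nr s0 by (intro mult_left_mono) auto
        thus ?thesis using big exp_le by (simp add: power2_eq_square algebra_simps)
      qed
      hence t2: "4 * exp 1 / (s0\<^sup>2 * real n ^ 3) \<le> 1 / (2 * real n)"
        using nr s0 by (simp add: divide_le_eq field_simps power_def)
      have t1: "1 / real n ^ 2 \<le> 1 / (2 * real n)"
        using nr by (simp add: divide_le_eq field_simps power2_eq_square)
      show ?thesis unfolding q using t1 t2 by simp
    qed
    have "measure_pmf.prob p (UNIV - A) \<le> measure_pmf.prob p (B1 \<union> B2)"
      by (rule measure_pmf.finite_measure_mono[OF cover]) simp
    also have "\<dots> \<le> measure_pmf.prob p B1 + measure_pmf.prob p B2"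
      by (rule measure_Un_le) simp_all
    finally have "measure_pmf.prob p (UNIV - A) \<le> 1 / real n" using mB1 mB2 arith by linarith
    moreover have "measure_pmf.prob p (UNIV - A) = 1 - measure_pmf.prob p A"
      using measure_pmf.prob_compl[of A p] by simp
    ultimately have "1 - 1 / real n \<le> measure_pmf.prob p A" by linarith
    thus ?thesis unfolding p_def \<tau>_def A_def .
  qed
  show ?thesis
    apply (rule exI[where x=b], rule conjI[OF bpos])
    apply (rule exI[where x=c], rule conjI[OF cpos])
    apply (rule exI[where x=n0])
    apply (intro allI impI)
    apply (rule main)
          apply assumption+
    done
qed


end
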